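(* Consider the stochastic energy exchange model $\mathbf{E}_t$ with transition kernel $P^t$ and the function $V=V_\eta$ described in the context. For all sufficiently small $\eta>0$ and $h>0$, there exist constants $c_0>0$ and $M_0>1$, depending on $\eta$, $N$ and $h$, such that $$(P^hV)(\mathbf{E})-V(\mathbf{E})\le -c_0V^{\alpha}(\mathbf{E})$$ for every $\mathbf{E}$ with $V(\mathbf{E})>M_0$, where $\alpha=1-\frac{1}{2(1-\eta)}$.
   Context: Fix an integer $N\ge1$, bath temperatures $T_L,T_R>0$ and a sufficiently large constant $K$ ($K\gg T_L,T_R$). Let $R(a,b)=\min\{K,\sqrt{\min(a,b)}\}$. The stochastic energy exchange model is the Markov jump process $\mathbf{E}_t=(E_1(t),\dots,E_N(t))$ on $\mathbb{R}^N_+$: for each $i=1,\dots,N-1$ an exponential clock with rate $R(E_i,E_{i+1})$ is attached to sites $i,i+1$; when it rings, $(E_i,E_{i+1})$ becomes $(p(E_i+E_{i+1}),(1-p)(E_i+E_{i+1}))$ with $p$ uniform on $(0,1)$. A clock of rate $R(T_L,E_1)$ (resp. $R(E_N,T_R)$) links site $1$ to the left bath (resp. site $N$ to the right bath); when it rings, $E_1$ becomes $p(E_1+X_L)$ (resp. $E_N$ becomes $p(E_N+X_R)$), with $p$ uniform on $(0,1)$ and $X_L$ (resp. $X_R$) exponential with mean $T_L$ (resp. $T_R$). All clocks and random variables are independent. $P^t$ is the transition kernel and $(P^hV)(\mathbf{E})=\mathbb{E}_{\mathbf{E}}[V(\mathbf{E}_h)]$. Let $a_m=1-\frac{2^{m-1}-1}{2^N-1}$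 ($m=1,\dots,N$), $V_{m,k}(\mathbf{E})=\big(\sum_{j=0}^{m-1}E_{k+j}\big)^{a_m\eta-1}$ for $1\le m\le N$, $1\le k\le N-m+1$, and $V(\mathbf{E})=\sum_{m=1}^N\sum_{k=1}^{N-m+1}V_{m,k}(\mathbf{E})$. *)

theory Defs
  imports "HOL-Probability.Probability"
begin

text \<open>States: functions E :: nat => real, with E i the energy of site i, i = 1..N.\<close>

definition rateR :: "real \<Rightarrow> real \<Rightarrow> real \<Rightarrow> real" where
  "rateR K a b = min K (sqrt (min a b))"

definition a_exp :: "nat \<Rightarrow> nat \<Rightarrow> real" where
  "a_exp N m = 1 - (2 ^ (m - 1) - 1) / (2 ^ N - 1)"

definition Vm :: "nat \<Rightarrow> real \<Rightarrow> nat \<Rightarrow> nat \<Rightarrow> (nat \<Rightarrow> real) \<Rightarrow> real" where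
  "Vm N \<eta> m k E = (\<Sum>j<m. E (k + j)) powr (a_exp N m * \<eta> - 1)"

definition Vfun :: "nat \<Rightarrow> real \<Rightarrow> (nat \<Rightarrow> real) \<Rightarrow> real" where
  "Vfun N \<eta> E = (\<Sum>m = 1..N. \<Sum>k = 1..N - m + 1. Vm N \<eta> m k E)"

text \<open>Uniform bound on the total jump rate: N+1 clocks, each of rate at most K.\<close>
definition Lam :: "nat \<Rightarrow> real \<Rightarrow> real" where
  "Lam N K = real (N + 1) * K"

definition total_rate :: "nat \<Rightarrow> real \<Rightarrow> real \<Rightarrow> real \<Rightarrow> (nat \<Rightarrow> real) \<Rightarrow> real" where
  "total_rate N K TL TR E =
     (\<Sum>i = 1..N - 1. rateR K (E i) (E (Suc i))) + rateR K TL (E 1) + rateR K (E N) TR"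

text \<open>One step of the uniformized (embedded) chain, acting on nonnegative observables:
  with total clock rate Lam, a clock event is the exchange i,i+1 with prob. R_i/Lam,
  left/right bath exchange with prob. R_L/Lam, R_R/Lam, and a fictitious jump otherwise.\<close>
definition Qop :: "nat \<Rightarrow> real \<Rightarrow> real \<Rightarrow> real \<Rightarrow> ((nat \<Rightarrow> real) \<Rightarrow> ennreal) \<Rightarrow> (nat \<Rightarrow> real) \<Rightarrow> ennreal" where
  "Qop N K TL TR f E = ennreal (1 / Lam N K) *
     ((\<Sum>i = 1..N - 1. ennreal (rateR K (E i) (E (Suc i))) *
         (\<integral>\<^sup>+ p \<in> {0<..<1}.
            f (E(i := p * (E i + E (Suc i)), Suc i := (1 - p) * (E i + E (Suc i)))) \<partial>lborel))
      + ennreal (rateR K TL (E 1)) *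
         (\<integral>\<^sup>+ x. ennreal (exponential_density (1 / TL) x) *
            (\<integral>\<^sup>+ p \<in> {0<..<1}. f (E(1 := p * (E 1 + x))) \<partial>lborel) \<partial>lborel)
      + ennreal (rateR K (E N) TR) *
         (\<integral>\<^sup>+ x. ennreal (exponential_density (1 / TR) x) *
            (\<integral>\<^sup>+ p \<in> {0<..<1}. f (E(N := p * (E N + x))) \<partial>lborel) \<partial>lborel)
      + ennreal (Lam N K - total_rate N K TL TR E) * f E)"

text \<open>Transition semigroup of the jump process (uniformization, valid since all rates
  are bounded by K): (P^h f)(E) = sum_n e^{-Lam h} (Lam h)^n / n! (Q^n f)(E).\<close>
definition Ph :: "nat \<Rightarrow> real \<Rightarrow> real \<Rightarrow> real \<Rightarrow> real \<Rightarrow> ((nat \<Rightarrow> real) \<Rightarrow> ennreal) \<Rightarrow> (nat \<Rightarrow> real) \<Rightarrow> ennreal" where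
  "Ph N K TL TR h f E =
     (\<Sum>n. ennreal (exp (- Lam N K * h) * (Lam N K * h) ^ n / fact n) * ((Qop N K TL TR ^^ n) f) E)"

end

theory Submission
  imports Defs
begin

lemma int_powr_01:
  fixes b :: real assumes "0 \<le> b" "b < 1"
  shows "(\<integral>\<^sup>+ p \<in> {0<..<1}. ennreal (p powr (-b)) \<partial>lborel) \<le> ennreal (1/(1-b))"
proof -
  have h: "((\<lambda>x. x powr (-b)) has_integral (1 powr (-b+1) / (-b+1))) {0..1::real}"
    by (rule has_integral_powr_from_0) (use assms in auto)
  have e: "(\<integral>\<^sup>+x. indicator {0..1::real} x * (x powr (-b)) \<partial>lborel) = ennreal (1 powr (-b+1) / (-b+1))"
    by (rule nn_integral_has_integral_lebesgue[OF _ h]) auto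
  have "(\<integral>\<^sup>+ p \<in> {0<..<1}. ennreal (p powr (-b)) \<partial>lborel) \<le> (\<integral>\<^sup>+x. indicator {0..1::real} x * (x powr (-b)) \<partial>lborel)"
    by (intro nn_integral_mono) (auto split: split_indicator)
  also have "\<dots> = ennreal (1/(1-b))" using e by simp
  finally show ?thesis .
qed

lemma int_powr_01':
  fixes b :: real assumes "0 \<le> b" "b < 1"
  shows "(\<integral>\<^sup>+ p \<in> {0<..<1}. ennreal ((1-p) powr (-b)) \<partial>lborel) \<le> ennreal (1/(1-b))"
proof -
  have "(\<integral>\<^sup>+ p. ennreal (p powr (-b)) * indicator {0<..<1} p \<partial>lborel)
     = ennreal \<bar>-1\<bar> * (\<integral>\<^sup>+ p. ennreal ((1 + (-1) * p) powr (-b)) * indicator {0<..<1} (1 + (-1)*p) \<partial>lborel)"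
    by (rule nn_integral_real_affine) auto
  also have "(\<lambda>p. ennreal ((1 + (-1) * p) powr (-b)) * indicator {0<..<1} (1 + (-1)*p)) 
     = (\<lambda>p::real. ennreal ((1-p) powr (-b)) * indicator {0<..<1} p)"
    by (auto simp: fun_eq_iff split: split_indicator)
  finally show ?thesis using int_powr_01[OF assms] by simp
qed

lemma int_dens: "0 < l \<Longrightarrow> (\<integral>\<^sup>+ x. ennreal (exponential_density l x) \<partial>lborel) = 1"
  using nn_integral_erlang_ith_moment[of l 0 0] by simp

lemma key_powr:
  fixes A s q b :: real
  assumes A: "0 \<le> A" and s: "0 < s" and q: "0 < q" "q < 1" and b: "0 < b" "b < 1"
  shows "(A + q * s) powr (-b) \<le> 2 * (A + s) powr (-b) * q powr (-b)"
proof -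
  have q0: "q powr b \<le> 1" using q b by (intro powr_le1) auto
  have q0': "0 < q powr b" using q by simp
  have q1: "1 \<le> q powr (-b)" using q0 q0' by (simp add: powr_minus one_le_inverse_iff)
  have h2: "((A+s)/2) powr (-b) \<le> 2 * (A+s) powr (-b)"
  proof -
    have d1: "((A+s)/2) powr (-b) = (A+s) powr (-b) / 2 powr (-b)"
      using A s by (intro powr_divide; simp)
    have d2: "(2::real) powr (-b) = inverse (2 powr b)" by (rule powr_minus)
    have "((A+s)/2) powr (-b) = (A+s) powr (-b) * 2 powr b"
      unfolding d1 d2 by (simp add: divide_inverse)
    also have "2 powr b \<le> 2 powr 1" using b by (intro powr_mono) auto
    hence "(A+s) powr (-b) * 2 powr b \<le> (A+s) powr (-b) * 2" by (intro mult_left_mono) auto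
    finally show ?thesis by simp
  qed
  show ?thesis
  proof (cases "s \<le> A")
    case True
    have "(A + q * s) powr (-b) \<le> A powr (-b)"
      using True s q A b by (intro powr_mono2') auto
    also have "\<dots> \<le> ((A+s)/2) powr (-b)" using True s b by (intro powr_mono2') auto
    also have "\<dots> \<le> 2 * (A + s) powr (-b)" by (rule h2)
    also have "\<dots> \<le> 2 * (A + s) powr (-b) * q powr (-b)"
      using q1 by (simp add: mult_le_cancel_left1)
    finally show ?thesis .
  next
    case False
    have "(A + q * s) powr (-b) \<le> (q * s) powr (-b)"
      using s q A b by (intro powr_mono2') auto
    also have "\<dots> = q powr (-b) * s powr (-b)" using q s by (simp add: powr_mult)
    also have "s powr (-b) \<le> ((A+s)/2) powr (-b)" using False s b A by (intro powr_mono2') auto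
    hence "q powr (-b) * s powr (-b) \<le> q powr (-b) * (2 * (A + s) powr (-b))"
      using h2 by (intro mult_left_mono) auto
    finally show ?thesis by (simp add: mult_ac)
  qed
qed

lemma powr_transfer:
  fixes x W e g :: real
  assumes "0 < x" "0 < W" "e < 0" "g < 0" "x powr e \<le> W"
  shows "x powr g \<le> W powr (g/e)"
proof -
  have e1: "x powr g = (x powr e) powr (g/e)" using assms by (simp add: powr_powr)
  have ge: "0 \<le> g/e" using assms by (simp add: zero_le_divide_iff)
  have "(x powr e) powr (g/e) \<le> W powr (g/e)" using assms ge by (intro powr_mono2) auto
  then show ?thesis using e1 by simp
qed

lemma sum_upd:
  fixes f :: "nat \<Rightarrow> real"
  assumes "finite S"
  shows "(\<Sum>j\<in>S. (f(a:=u)) j) = (\<Sum>j\<in>S. f j) - (if a \<in> S then f a else 0) + (if a \<in> S then u else 0)"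
proof (cases "a \<in> S")
  case True
  have "(\<Sum>j\<in>S. (f(a:=u)) j) = (f(a:=u)) a + (\<Sum>j\<in>S-{a}. (f(a:=u)) j)"
    using True assms by (simp add: sum.remove)
  also have "(\<Sum>j\<in>S-{a}. (f(a:=u)) j) = (\<Sum>j\<in>S-{a}. f j)" by (intro sum.cong) auto
  also have "(\<Sum>j\<in>S. f j) = f a + (\<Sum>j\<in>S-{a}. f j)" using True assms by (simp add: sum.remove)
  ultimately show ?thesis using True by simp
next
  case False
  have "(\<Sum>j\<in>S. (f(a:=u)) j) = (\<Sum>j\<in>S. f j)" using False by (intro sum.cong) auto
  then show ?thesis using False by simp
qed

definition bs :: "(nat \<Rightarrow> real) \<Rightarrow> nat \<Rightarrow> nat \<Rightarrow> real" where
  "bs E m k = (\<Sum>j<m. E (k + j))"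

lemma bs_atL: "bs E m k = (\<Sum>j\<in>{k..<k+m}. E j)"
  unfolding bs_def by (induction m) auto

lemma bs_Suc: "bs E (Suc m) k = bs E m k + E (k + m)"
  unfolding bs_def by simp

definition Bl :: "nat \<Rightarrow> (nat \<times> nat) set" where
  "Bl N = Sigma {1..N} (\<lambda>m. {1..N-m+1})"

lemma finite_Bl[simp]: "finite (Bl N)" unfolding Bl_def by auto

lemma Vfun_Bl: "Vfun N \<eta> E = (\<Sum>(m,k)\<in>Bl N. Vm N \<eta> m k E)"
  unfolding Vfun_def Bl_def by (subst sum.Sigma) auto

definition posE :: "nat \<Rightarrow> (nat \<Rightarrow> real) \<Rightarrow> bool" where
  "posE N E \<longleftrightarrow> (\<forall>i\<in>{1..N}. 0 < E i)"

lemma Vm_nonneg: "0 \<le> Vm N \<eta> m k E" unfolding Vm_def by simp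

lemma bs_pos:
  assumes "posE N E" "(m,k) \<in> Bl N" shows "0 < bs E m k"
  unfolding bs_def
proof (rule sum_pos2[of _ 0])
  show "finite {..<m}" by simp
  show "0 \<in> {..<m}" using assms by (auto simp: Bl_def)
  show "0 < E (k+0)" using assms by (auto simp: Bl_def posE_def)
  show "\<And>j. j \<in> {..<m} \<Longrightarrow> 0 \<le> E (k+j)" using assms by (auto simp: Bl_def posE_def intro!: less_imp_le)
qed

lemma bs_ge:
  assumes "posE N E" "(m,k) \<in> Bl N" "k \<le> j" "j < k + m" shows "E j \<le> bs E m k"
proof -
  have "E j \<le> (\<Sum>j\<in>{k..<k+m}. E j)"
    using assms by (intro member_le_sum) (auto simp: Bl_def posE_def intro!: less_imp_le)
  thus ?thesis by (simp add: bs_atL)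
qed

lemma V_ge_Vm:
  assumes "(m,k) \<in> Bl N" shows "Vm N \<eta> m k E \<le> Vfun N \<eta> E"
proof -
  have "Vm N \<eta> m k E \<le> (\<Sum>(m,k)\<in>Bl N. Vm N \<eta> m k E)"
    using member_le_sum[of "(m,k)" "Bl N" "\<lambda>(m,k). Vm N \<eta> m k E"] assms by (simp add: Vm_nonneg split_def)
  thus ?thesis by (simp add: Vfun_Bl)
qed

lemma Vm_bs: "Vm N \<eta> m k E = bs E m k powr (a_exp N m * \<eta> - 1)"
  unfolding Vm_def bs_def by simp

lemma a_exp_props:
  assumes "1 \<le> m" "m \<le> N"
  shows "0 < a_exp N m" "a_exp N m \<le> 1" "a_exp N N \<le> a_exp N m"
proof -
  have p1: "(1::real) \<le> 2^(m-1)" by simp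
  have p2: "(2::real)^(m-1) \<le> 2^(N-1)" using assms by (intro power_increasing) auto
  have p3: "(2::real)^(N-1) < 2^N" using assms by (intro power_strict_increasing) auto
  have D: "(1::real) < 2^N" using assms by (simp add: one_less_power)
  have "(2^(m-1) - 1) / (2^N - 1) < (1::real)" using p2 p3 D by (simp add: divide_less_eq)
  then show "0 < a_exp N m" unfolding a_exp_def by simp
  have "0 \<le> (2^(m-1) - 1) / (2^N - (1::real))" using p1 D by (intro divide_nonneg_pos) auto
  then show "a_exp N m \<le> 1" unfolding a_exp_def by simp
  have "(2^(m-1) - 1) / (2^N - 1) \<le> (2^(N-1) - 1) / (2^N - (1::real))"
    using p2 D by (intro divide_right_mono) auto
  then show "a_exp N N \<le> a_exp N m" unfolding a_exp_def by simp
qed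

definition exE :: "nat \<Rightarrow> real \<Rightarrow> (nat \<Rightarrow> real) \<Rightarrow> (nat \<Rightarrow> real)" where
  "exE i p E = E(i := p * (E i + E (Suc i)), Suc i := (1-p) * (E i + E (Suc i)))"

definition ee :: "nat \<Rightarrow> real \<Rightarrow> nat \<Rightarrow> real" where
  "ee N \<eta> m = a_exp N m * \<eta> - 1"

definition affx :: "nat \<Rightarrow> nat \<Rightarrow> nat \<Rightarrow> bool" where
  "affx i m k \<longleftrightarrow> ((k \<le> i \<and> i < k+m) \<noteq> (k \<le> Suc i \<and> Suc i < k+m))"

lemma bs_Suc_left: "bs E (Suc m) k = E k + bs E m (Suc k)"
  unfolding bs_def by (induction m) (simp_all add: add_ac)

lemma ee_props:
  assumes "1 \<le> m" "m \<le> N" "0 < \<eta>" "\<eta> < 1/2"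
  shows "-1 < ee N \<eta> m" "ee N \<eta> m < -1/2" "ee N \<eta> N \<le> ee N \<eta> m"
proof -
  note a = a_exp_props[OF assms(1,2)]
  have "0 < a_exp N m * \<eta>" using a assms by simp
  then show "-1 < ee N \<eta> m" unfolding ee_def by simp
  have "a_exp N m * \<eta> \<le> 1 * \<eta>" using a assms by (intro mult_right_mono) auto
  then show "ee N \<eta> m < -1/2" unfolding ee_def using assms by linarith
  have "a_exp N N * \<eta> \<le> a_exp N m * \<eta>" using a assms by (intro mult_right_mono) auto
  then show "ee N \<eta> N \<le> ee N \<eta> m" unfolding ee_def by simp
qed

lemma bs_exE:
  "bs (exE i p E) m k = bs E m k
     - (if k \<le> i \<and> i < k+m then E i else 0) + (if k \<le> i \<and> i < k+m then p * (E i + E (Suc i)) else 0)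
     - (if k \<le> Suc i \<and> Suc i < k+m then E (Suc i) else 0) + (if k \<le> Suc i \<and> Suc i < k+m then (1-p) * (E i + E (Suc i)) else 0)"
  unfolding bs_atL exE_def
  by (simp add: sum_upd del: fun_upd_apply) (simp add: sum_upd)

lemma ex_block:
  assumes pos: "posE N E" and i: "1 \<le> i" "Suc i \<le> N" and blk: "(m,k) \<in> Bl N"
    and p: "0 < p" "p < 1" and eta: "0 < \<eta>" "\<eta> < 1/2"
  shows "Vm N \<eta> m k (exE i p E) \<le> (if affx i m k then
            2 * bs E (Suc m) (if k \<le> i then k else i) powr (ee N \<eta> m) * (p powr (ee N \<eta> N) + (1-p) powr (ee N \<eta> N))
          else Vm N \<eta> m k E)"
proof -
  have m: "1 \<le> m" "m \<le> N" "1 \<le> k" "k + m \<le> Suc N" using blk by (auto simp: Bl_def)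
  note eep = ee_props[OF m(1,2) eta]
  have Ei: "0 < E i" "0 < E (Suc i)" using pos i by (auto simp: posE_def)
  define s where "s = E i + E (Suc i)"
  have s: "0 < s" using Ei by (simp add: s_def)
  have qb: "q powr (ee N \<eta> m) \<le> p powr (ee N \<eta> N) + (1-p) powr (ee N \<eta> N)"
    if "q = p \<or> q = 1 - p" for q
  proof -
    have "q powr (ee N \<eta> m) \<le> q powr (ee N \<eta> N)"
      using that p eep by (intro powr_mono') auto
    moreover have "0 \<le> p powr (ee N \<eta> N)" "0 \<le> (1-p) powr (ee N \<eta> N)" by auto
    ultimately show ?thesis using that by (metis add.commute add_increasing2)
  qed
  have VmE: "Vm N \<eta> m k F = bs F m k powr (ee N \<eta> m)" for F by (simp add: Vm_bs ee_def)
  show ?thesis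
  proof (cases "affx i m k")
    case False
    then have "bs (exE i p E) m k = bs E m k" unfolding bs_exE affx_def by (auto simp: algebra_simps)
    then show ?thesis using False by (simp add: VmE)
  next
    case True
    have key: "(A + q * s) powr (ee N \<eta> m) \<le> 2 * (A + s) powr (ee N \<eta> m) * q powr (ee N \<eta> m)"
      if "0 \<le> A" "0 < q" "q < 1" for A q
      using key_powr[OF that(1) s that(2,3), of "- ee N \<eta> m"] eep by simp
    show ?thesis
    proof (cases "k \<le> i \<and> i < k+m")
      case c: True
      then have c2: "\<not> (k \<le> Suc i \<and> Suc i < k+m)" "k + m = Suc i" using True unfolding affx_def by auto
      define A where "A = bs E m k - E i"
      have A: "0 \<le> A" using bs_ge[OF pos blk, of i] c by (simp add: A_def)
      have b1: "bs (exE i p E) m k = A + p * s" unfolding bs_exE A_def s_def using c c2 by simp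
      have b2: "bs E (Suc m) k = A + s" unfolding bs_Suc A_def s_def using c2 by simp
      have "Vm N \<eta> m k (exE i p E) \<le> 2 * (A + s) powr (ee N \<eta> m) * p powr (ee N \<eta> m)"
        unfolding VmE b1 using key[OF A p] .
      also have "\<dots> \<le> 2 * (A + s) powr (ee N \<eta> m) * (p powr (ee N \<eta> N) + (1-p) powr (ee N \<eta> N))"
        using qb[of p] by (intro mult_left_mono) auto
      finally show ?thesis using True c b2 by simp
    next
      case c: False
      then have c2: "k \<le> Suc i \<and> Suc i < k+m" "k = Suc i" using True unfolding affx_def by auto
      define A where "A = bs E m k - E (Suc i)"
      have A: "0 \<le> A" using bs_ge[OF pos blk, of "Suc i"] c2 by (simp add: A_def)
      have b1: "bs (exE i p E) m k = A + (1-p) * s" unfolding bs_exE A_def s_def using c c2 by simp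
      have b2: "bs E (Suc m) i = A + s" unfolding bs_Suc_left A_def s_def using c2 by simp
      have "Vm N \<eta> m k (exE i p E) \<le> 2 * (A + s) powr (ee N \<eta> m) * (1-p) powr (ee N \<eta> m)"
        unfolding VmE b1 using key[OF A, of "1-p"] p by simp
      also have "\<dots> \<le> 2 * (A + s) powr (ee N \<eta> m) * (p powr (ee N \<eta> N) + (1-p) powr (ee N \<eta> N))"
        using qb[of "1-p"] by (intro mult_left_mono) auto
      finally show ?thesis using True c c2 b2 by simp
    qed
  qed
qed

definition Dx :: "nat \<Rightarrow> real \<Rightarrow> nat \<Rightarrow> (nat \<Rightarrow> real) \<Rightarrow> real" where
  "Dx N \<eta> i E = (\<Sum>(m,k)\<in>Bl N. if affx i m k then Vm N \<eta> m k E else 0)"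

definition Ix :: "nat \<Rightarrow> real \<Rightarrow> nat \<Rightarrow> (nat \<Rightarrow> real) \<Rightarrow> real" where
  "Ix N \<eta> i E = (\<Sum>(m,k)\<in>Bl N. if affx i m k then 2 * bs E (Suc m) (if k \<le> i then k else i) powr (ee N \<eta> m) else 0)"

lemma sum_if_split:
  fixes X Y :: "'a \<Rightarrow> real"
  shows "(\<Sum>x\<in>S. if P x then X x * g else Y x) = (\<Sum>x\<in>S. Y x) - (\<Sum>x\<in>S. if P x then Y x else 0) + (\<Sum>x\<in>S. if P x then X x else 0) * g"
proof -
  show ?thesis
    by (subst sum.cong[OF refl, of S _ "\<lambda>x. Y x - (if P x then Y x else 0) + (if P x then X x else 0) * g"])
       (auto simp: sum.distrib sum_subtractf sum_distrib_right)
qed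

lemma ex_V:
  assumes pos: "posE N E" and i: "1 \<le> i" "Suc i \<le> N"
    and p: "0 < p" "p < 1" and eta: "0 < \<eta>" "\<eta> < 1/2"
  shows "Vfun N \<eta> (exE i p E) \<le> Vfun N \<eta> E - Dx N \<eta> i E + Ix N \<eta> i E * (p powr (ee N \<eta> N) + (1-p) powr (ee N \<eta> N))"
proof -
  have "Vfun N \<eta> (exE i p E) \<le> (\<Sum>(m,k)\<in>Bl N. if affx i m k then
            2 * bs E (Suc m) (if k \<le> i then k else i) powr (ee N \<eta> m) * (p powr (ee N \<eta> N) + (1-p) powr (ee N \<eta> N))
          else Vm N \<eta> m k E)"
    unfolding Vfun_Bl split_def
    by (intro sum_mono ex_block[OF pos i _ p eta]) auto
  also have "\<dots> = Vfun N \<eta> E - Dx N \<eta> i E + Ix N \<eta> i E * (p powr (ee N \<eta> N) + (1-p) powr (ee N \<eta> N))"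
    unfolding Vfun_Bl Dx_def Ix_def split_def by (rule sum_if_split)
  finally show ?thesis .
qed

lemma bs_upd:
  "bs (E(j := u)) m k = bs E m k - (if k \<le> j \<and> j < k+m then E j else 0) + (if k \<le> j \<and> j < k+m then u else 0)"
  unfolding bs_atL by (simp add: sum_upd del: fun_upd_apply)

definition Db :: "nat \<Rightarrow> real \<Rightarrow> nat \<Rightarrow> (nat \<Rightarrow> real) \<Rightarrow> real" where
  "Db N \<eta> j E = (\<Sum>(m,k)\<in>Bl N. if k \<le> j \<and> j < k+m then Vm N \<eta> m k E else 0)"

definition cb :: "nat \<Rightarrow> nat \<Rightarrow> real" where
  "cb N j = (\<Sum>(m,k)\<in>Bl N. if k \<le> j \<and> j < k+m then 1 else 0)"

lemma bath_block:
  assumes pos: "posE N E" and j: "1 \<le> j" "j \<le> N" and blk: "(m,k) \<in> Bl N"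
    and p: "0 < p" "p < 1" and x: "0 < x" and eta: "0 < \<eta>" "\<eta> < 1/2"
  shows "Vm N \<eta> m k (E(j := p * (E j + x))) \<le> (if k \<le> j \<and> j < k+m then
            1 * (p powr (ee N \<eta> N) * (x powr (ee N \<eta> N) + 1)) else Vm N \<eta> m k E)"
proof -
  have m: "1 \<le> m" "m \<le> N" using blk by (auto simp: Bl_def)
  note eep = ee_props[OF m(1,2) eta]
  have VmE: "Vm N \<eta> m k F = bs F m k powr (ee N \<eta> m)" for F by (simp add: Vm_bs ee_def)
  have Ej: "0 < E j" using pos j by (auto simp: posE_def)
  show ?thesis
  proof (cases "k \<le> j \<and> j < k+m")
    case False
    have "bs (E(j := p * (E j + x))) m k = bs E m k" by (simp only: bs_upd if_not_P[OF False])
    then show ?thesis unfolding if_not_P[OF False] VmE by simp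
  next
    case True
    define A where "A = bs E m k - E j"
    have A: "0 \<le> A" using bs_ge[OF pos blk, of j] True by (simp add: A_def)
    have b1: "bs (E(j := p * (E j + x))) m k = A + p * (E j + x)" unfolding bs_upd A_def using True by simp
    have "(A + p * (E j + x)) powr (ee N \<eta> m) \<le> (p * x) powr (ee N \<eta> m)"
      using A p x Ej eep by (intro powr_mono2') (auto simp: algebra_simps)
    also have "\<dots> = p powr (ee N \<eta> m) * x powr (ee N \<eta> m)" using p x by (simp add: powr_mult)
    also have "\<dots> \<le> p powr (ee N \<eta> N) * (x powr (ee N \<eta> N) + 1)"
    proof (intro mult_mono)
      show "p powr (ee N \<eta> m) \<le> p powr (ee N \<eta> N)" using p eep by (intro powr_mono') auto
      show "x powr (ee N \<eta> m) \<le> x powr (ee N \<eta> N) + 1"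
      proof (cases "x \<le> 1")
        case True
        have "x powr (ee N \<eta> m) \<le> x powr (ee N \<eta> N)" using True x eep by (intro powr_mono') auto
        then show ?thesis by simp
      next
        case False
        have "x powr (ee N \<eta> m) \<le> x powr 0" using False eep by (intro powr_mono) auto
        then have "x powr (ee N \<eta> m) \<le> 1" using False by simp
        moreover have "0 \<le> x powr (ee N \<eta> N)" by simp
        ultimately show ?thesis using False by linarith
      qed
    qed auto
    finally show ?thesis using True by (simp add: VmE b1)
  qed
qed

lemma bath_V:
  assumes pos: "posE N E" and j: "1 \<le> j" "j \<le> N"
    and p: "0 < p" "p < 1" and x: "0 < x" and eta: "0 < \<eta>" "\<eta> < 1/2"
  shows "Vfun N \<eta> (E(j := p * (E j + x))) \<le> Vfun N \<eta> E - Db N \<eta> j E + cb N j * (p powr (ee N \<eta> N) * (x powr (ee N \<eta> N) + 1))"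
proof -
  have "Vfun N \<eta> (E(j := p * (E j + x))) \<le> (\<Sum>(m,k)\<in>Bl N. if k \<le> j \<and> j < k+m then
            1 * (p powr (ee N \<eta> N) * (x powr (ee N \<eta> N) + 1)) else Vm N \<eta> m k E)"
    unfolding Vfun_Bl split_def
    by (intro sum_mono bath_block[OF pos j _ p x eta]) auto
  also have "\<dots> = Vfun N \<eta> E - Db N \<eta> j E + cb N j * (p powr (ee N \<eta> N) * (x powr (ee N \<eta> N) + 1))"
    unfolding Vfun_Bl Db_def cb_def split_def by (rule sum_if_split)
  finally show ?thesis .
qed

lemma int_p2:
  fixes b C0 C1 :: real
  assumes "0 \<le> b" "b < 1" "0 \<le> C0" "0 \<le> C1"
  shows "(\<integral>\<^sup>+ p \<in> {0<..<1}. ennreal (C0 + C1 * (p powr (-b) + (1-p) powr (-b))) \<partial>lborel) \<le> ennreal (C0 + C1 * (2/(1-b)))"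
proof -
  have "(\<integral>\<^sup>+ p \<in> {0<..<1}. ennreal (C0 + C1 * (p powr (-b) + (1-p) powr (-b))) \<partial>lborel)
      = (\<integral>\<^sup>+ p. ennreal C0 * indicator {0<..<1::real} p + (ennreal C1 * (ennreal (p powr (-b)) * indicator {0<..<1} p)
            + ennreal C1 * (ennreal ((1-p) powr (-b)) * indicator {0<..<1} p)) \<partial>lborel)"
    using assms by (intro nn_integral_cong) (auto simp: ennreal_plus[symmetric] ennreal_mult[symmetric] distrib_left split: split_indicator simp del: ennreal_plus)
  also have "\<dots> = (\<integral>\<^sup>+ p. ennreal C0 * indicator {0<..<1::real} p \<partial>lborel) + ((\<integral>\<^sup>+ p. ennreal C1 * (ennreal (p powr (-b)) * indicator {0<..<1} p) \<partial>lborel)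
            + (\<integral>\<^sup>+ p. ennreal C1 * (ennreal ((1-p) powr (-b)) * indicator {0<..<1} p) \<partial>lborel))"
    by (subst nn_integral_add; (subst nn_integral_add)?) auto
  also have "\<dots> = ennreal C0 + (ennreal C1 * (\<integral>\<^sup>+ p \<in> {0<..<1}. ennreal (p powr (-b)) \<partial>lborel)
            + ennreal C1 * (\<integral>\<^sup>+ p \<in> {0<..<1}. ennreal ((1-p) powr (-b)) \<partial>lborel))"
    by (subst nn_integral_cmult; simp)+
  also have "\<dots> \<le> ennreal C0 + (ennreal C1 * ennreal (1/(1-b)) + ennreal C1 * ennreal (1/(1-b)))"
    using int_powr_01[OF assms(1,2)] int_powr_01'[OF assms(1,2)]
    by (intro add_mono mult_left_mono order.refl) auto
  also have "\<dots> = ennreal (C0 + C1 * (2/(1-b)))"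
  proof -
    have b1: "1 - b \<noteq> 0" using assms by simp
    have t: "(2::real)/(1-b) = 1/(1-b) + 1/(1-b)" by (metis add_divide_distrib one_add_one)
    have e: "C0 + C1 * (2/(1-b)) = C0 + (C1 * (1/(1-b)) + C1 * (1/(1-b)))" unfolding t by (simp only: distrib_left)
    have nn: "0 \<le> 1/(1-b)" using assms by auto
    define X where "X = C1 * (1/(1-b))"
    have X: "0 \<le> X" using assms nn by (simp add: X_def)
    have m: "ennreal X = ennreal C1 * ennreal (1/(1-b))" unfolding X_def using assms nn by (subst ennreal_mult[symmetric]; simp)
    have "ennreal (C0 + (X + X)) = ennreal C0 + ennreal (X + X)" using assms X by (intro ennreal_plus) auto
    also have "ennreal (X + X) = ennreal X + ennreal X" using X by (intro ennreal_plus) auto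
    finally show ?thesis unfolding e X_def[symmetric] m by simp
  qed
  finally show ?thesis .
qed

lemma int_p1:
  fixes b C0 C1 :: real
  assumes "0 \<le> b" "b < 1" "0 \<le> C0" "0 \<le> C1"
  shows "(\<integral>\<^sup>+ p \<in> {0<..<1}. ennreal (C0 + C1 * p powr (-b)) \<partial>lborel) \<le> ennreal (C0 + C1 * (2/(1-b)))"
proof -
  have "(\<integral>\<^sup>+ p \<in> {0<..<1}. ennreal (C0 + C1 * p powr (-b)) \<partial>lborel) \<le>
        (\<integral>\<^sup>+ p \<in> {0<..<1}. ennreal (C0 + C1 * (p powr (-b) + (1-p) powr (-b))) \<partial>lborel)"
    using assms by (intro nn_integral_mono) (auto split: split_indicator intro!: ennreal_leI mult_left_mono)
  also have "\<dots> \<le> ennreal (C0 + C1 * (2/(1-b)))" by (rule int_p2[OF assms])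
  finally show ?thesis .
qed

lemma int_x:
  fixes b C0 C2 l :: real
  assumes "0 \<le> b" "b < 1" "0 \<le> C0" "0 \<le> C2" "0 < l"
  shows "(\<integral>\<^sup>+ x. ennreal (exponential_density l x) * ennreal (C0 + C2 * (x powr (-b) + 1)) \<partial>lborel)
          \<le> ennreal (C0 + 2 * C2 + C2 * l / (1-b))"
proof -
  have pw: "exponential_density l x * (C0 + C2 * (x powr (-b) + 1))
      \<le> (C0 + 2*C2) * exponential_density l x + (C2 * l) * (x powr (-b) * indicator {0<..<1} x)" for x
  proof (cases "x < 0")
    case True then show ?thesis by (simp add: exponential_density_def)
  next
    case False
    have d0: "0 \<le> exponential_density l x" "exponential_density l x \<le> l"
      using False assms by (auto simp: exponential_density_def)
    show ?thesis
    proof (cases "0 < x \<and> x < 1")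
      case True
      have h1: "exponential_density l x * (C2 * x powr (-b)) \<le> l * (C2 * x powr (-b))"
        using d0 assms by (intro mult_right_mono) auto
      have h2: "0 \<le> C2 * exponential_density l x" using d0 assms by simp
      have eqL: "exponential_density l x * (C0 + C2 * (x powr (-b) + 1)) = C0 * exponential_density l x + C2 * exponential_density l x + exponential_density l x * (C2 * x powr (-b))"
        by (simp add: algebra_simps)
      have eqR: "(C0 + 2*C2) * exponential_density l x + (C2 * l) * (x powr (-b) * indicator {0<..<1} x) = C0 * exponential_density l x + 2 * (C2 * exponential_density l x) + l * (C2 * x powr (-b))"
        using True by (simp add: algebra_simps)
      show ?thesis unfolding eqL eqR using h1 h2 by linarith
    next
      case c: False
      have "x powr (-b) \<le> 1"
      proof (cases "x = 0")
        case False
        then have "1 \<le> x" using c \<open>\<not> x < 0\<close> by auto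
        then have "x powr (-b) \<le> x powr 0" using assms by (intro powr_mono) auto
        then show ?thesis using \<open>1 \<le> x\<close> by simp
      qed simp
      then have "exponential_density l x * (C2 * (x powr (-b) + 1)) \<le> exponential_density l x * (C2 * 2)"
        using d0 assms by (intro mult_left_mono) auto
      then show ?thesis using c d0 assms by (simp add: algebra_simps)
    qed
  qed
  have "(\<integral>\<^sup>+ x. ennreal (exponential_density l x) * ennreal (C0 + C2 * (x powr (-b) + 1)) \<partial>lborel)
      \<le> (\<integral>\<^sup>+ x. ennreal ((C0 + 2*C2) * exponential_density l x) + ennreal (C2 * l) * (ennreal (x powr (-b)) * indicator {0<..<1} x) \<partial>lborel)"
  proof (intro nn_integral_mono)
    fix x
    have "ennreal (exponential_density l x) * ennreal (C0 + C2 * (x powr (-b) + 1))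
        = ennreal (exponential_density l x * (C0 + C2 * (x powr (-b) + 1)))"
      using assms by (simp add: ennreal_mult exponential_density_nonneg)
    also have "\<dots> \<le> ennreal ((C0 + 2*C2) * exponential_density l x + (C2 * l) * (x powr (-b) * indicator {0<..<1} x))"
      by (intro ennreal_leI pw)
    also have "\<dots> = ennreal ((C0 + 2*C2) * exponential_density l x) + ennreal (C2 * l) * (ennreal (x powr (-b)) * indicator {0<..<1} x)"
      using assms by (simp add: ennreal_plus ennreal_mult exponential_density_nonneg split: split_indicator)
    finally show "ennreal (exponential_density l x) * ennreal (C0 + C2 * (x powr (-b) + 1))
        \<le> ennreal ((C0 + 2*C2) * exponential_density l x) + ennreal (C2 * l) * (ennreal (x powr (-b)) * indicator {0<..<1} x)" .
  qed
  also have "\<dots> = (\<integral>\<^sup>+ x. ennreal (C0 + 2*C2) * ennreal (exponential_density l x) \<partial>lborel)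
         + (\<integral>\<^sup>+ x. ennreal (C2 * l) * (ennreal (x powr (-b)) * indicator {0<..<1} x) \<partial>lborel)"
    using assms by (subst nn_integral_add) (auto simp: ennreal_mult)
  also have "\<dots> = ennreal (C0 + 2*C2) * (\<integral>\<^sup>+ x. ennreal (exponential_density l x) \<partial>lborel)
         + ennreal (C2 * l) * (\<integral>\<^sup>+ x \<in> {0<..<1}. ennreal (x powr (-b)) \<partial>lborel)"
    by (subst nn_integral_cmult; simp)+
  also have "\<dots> \<le> ennreal (C0 + 2*C2) * 1 + ennreal (C2 * l) * ennreal (1/(1-b))"
    using int_dens[OF assms(5)] int_powr_01[OF assms(1,2)] by (intro add_mono mult_left_mono) auto
  also have "\<dots> = ennreal (C0 + 2 * C2 + C2 * l / (1-b))"
    using assms by (simp add: ennreal_plus[symmetric] ennreal_mult[symmetric] del: ennreal_plus)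
  finally show ?thesis .
qed

lemma rateR_nonneg: "0 \<le> K \<Longrightarrow> 0 < a \<Longrightarrow> 0 < b \<Longrightarrow> 0 \<le> rateR K a b"
  unfolding rateR_def by auto

lemma rateR_le_K: "rateR K a b \<le> K"
  unfolding rateR_def by auto

lemma rateR_le_sqrt_min: "rateR K a b \<le> sqrt (min a b)"
  unfolding rateR_def by simp

lemma rateR_le_sqrt: "rateR K a b \<le> sqrt a" "rateR K a b \<le> sqrt b"
  using rateR_le_sqrt_min[of K a b]
  by (meson min.cobounded1 min.cobounded2 order_trans real_sqrt_le_mono)+

lemma Dx_le: "0 \<le> Dx N \<eta> i E" "Dx N \<eta> i E \<le> Vfun N \<eta> E"
  unfolding Dx_def Vfun_Bl split_def
  by (auto intro!: sum_nonneg sum_mono simp: Vm_nonneg)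

lemma Db_le: "0 \<le> Db N \<eta> j E" "Db N \<eta> j E \<le> Vfun N \<eta> E"
  unfolding Db_def Vfun_Bl split_def
  by (auto intro!: sum_nonneg sum_mono simp: Vm_nonneg)

lemma Ix_nonneg: "0 \<le> Ix N \<eta> i E"
  unfolding Ix_def split_def by (auto intro!: sum_nonneg)

lemma cb_nonneg: "0 \<le> cb N j"
  unfolding cb_def split_def by (auto intro!: sum_nonneg)

lemma posE_exE:
  assumes "posE N E" "1 \<le> i" "Suc i \<le> N" "0 < p" "p < 1"
  shows "posE N (exE i p E)"
  using assms unfolding posE_def exE_def by (auto intro!: mult_pos_pos add_pos_pos)

lemma posE_bath:
  assumes "posE N E" "1 \<le> j" "j \<le> N" "0 \<le> x" "0 < p"
  shows "posE N (E(j := p * (E j + x)))"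
  using assms unfolding posE_def by (auto intro!: mult_pos_pos add_pos_nonneg)

lemma total_rate_le:
  assumes "0 \<le> K" "1 \<le> N"
  shows "total_rate N K TL TR E \<le> Lam N K"
proof -
  have "(\<Sum>i = 1..N - 1. rateR K (E i) (E (Suc i))) \<le> (\<Sum>i = 1..N - 1. K)"
    by (intro sum_mono rateR_le_K)
  also have "\<dots> = real (N - 1) * K" by simp
  finally have "total_rate N K TL TR E \<le> real (N-1) * K + K + K"
    unfolding total_rate_def using rateR_le_K[of K] by (smt (verit))
  also have "\<dots> \<le> Lam N K" unfolding Lam_def using assms
    by (cases N) (auto simp: algebra_simps)
  finally show ?thesis .
qed

lemma Qop_mono:
  assumes pos: "posE N E" and K: "0 \<le> K" and T: "0 < TL" "0 < TR" and N1: "1 \<le> N"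
    and fg: "\<And>F. posE N F \<Longrightarrow> f F \<le> g F"
  shows "Qop N K TL TR f E \<le> Qop N K TL TR g E"
  unfolding Qop_def
proof (intro mult_left_mono add_mono sum_mono order.refl)
  fix i assume i: "i \<in> {1..N-1}"
  show "(\<integral>\<^sup>+ p \<in> {0<..<1}. f (E(i := p * (E i + E (Suc i)), Suc i := (1 - p) * (E i + E (Suc i)))) \<partial>lborel)
      \<le> (\<integral>\<^sup>+ p \<in> {0<..<1}. g (E(i := p * (E i + E (Suc i)), Suc i := (1 - p) * (E i + E (Suc i)))) \<partial>lborel)"
    using i pos fg posE_exE[OF pos] unfolding exE_def
    by (intro nn_integral_mono) (auto split: split_indicator intro!: mult_right_mono)
next
  show "f E \<le> g E" using fg pos .
next
  have in1: "(\<integral>\<^sup>+ p \<in> {0<..<1}. f (E(j := p * (E j + x))) \<partial>lborel) \<le> (\<integral>\<^sup>+ p \<in> {0<..<1}. g (E(j := p * (E j + x))) \<partial>lborel)"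
    if "1 \<le> j" "j \<le> N" "0 \<le> x" for j x
    using that pos fg posE_bath[OF pos that]
    by (intro nn_integral_mono) (auto split: split_indicator intro!: mult_right_mono)
  have dens0: "ennreal (exponential_density l x) = 0" if "x < 0" for l x
    using that by (simp add: exponential_density_def)
  show "(\<integral>\<^sup>+ x. ennreal (exponential_density (1 / TL) x) *
            (\<integral>\<^sup>+ p \<in> {0<..<1}. f (E(1 := p * (E 1 + x))) \<partial>lborel) \<partial>lborel)
      \<le> (\<integral>\<^sup>+ x. ennreal (exponential_density (1 / TL) x) *
            (\<integral>\<^sup>+ p \<in> {0<..<1}. g (E(1 := p * (E 1 + x))) \<partial>lborel) \<partial>lborel)"
  proof (intro nn_integral_mono)
    fix x :: real
    show "ennreal (exponential_density (1 / TL) x) * (\<integral>\<^sup>+ p \<in> {0<..<1}. f (E(1 := p * (E 1 + x))) \<partial>lborel)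
       \<le> ennreal (exponential_density (1 / TL) x) * (\<integral>\<^sup>+ p \<in> {0<..<1}. g (E(1 := p * (E 1 + x))) \<partial>lborel)"
      using in1[of 1 x] N1 dens0[of x] by (cases "x < 0") (auto intro: mult_left_mono)
  qed
  show "(\<integral>\<^sup>+ x. ennreal (exponential_density (1 / TR) x) *
            (\<integral>\<^sup>+ p \<in> {0<..<1}. f (E(N := p * (E N + x))) \<partial>lborel) \<partial>lborel)
      \<le> (\<integral>\<^sup>+ x. ennreal (exponential_density (1 / TR) x) *
            (\<integral>\<^sup>+ p \<in> {0<..<1}. g (E(N := p * (E N + x))) \<partial>lborel) \<partial>lborel)"
  proof (intro nn_integral_mono)
    fix x :: real
    show "ennreal (exponential_density (1 / TR) x) * (\<integral>\<^sup>+ p \<in> {0<..<1}. f (E(N := p * (E N + x))) \<partial>lborel)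
       \<le> ennreal (exponential_density (1 / TR) x) * (\<integral>\<^sup>+ p \<in> {0<..<1}. g (E(N := p * (E N + x))) \<partial>lborel)"
      using in1[of N x] N1 dens0[of x] by (cases "x < 0") (auto intro: mult_left_mono)
  qed
qed auto

definition XB :: "nat \<Rightarrow> real \<Rightarrow> real \<Rightarrow> nat \<Rightarrow> real" where
  "XB N \<eta> T j = 2 * (cb N j * (2/(1 + ee N \<eta> N))) + (cb N j * (2/(1 + ee N \<eta> N))) * (1/T) / (1 + ee N \<eta> N)"

definition Rq :: "nat \<Rightarrow> real \<Rightarrow> real \<Rightarrow> real \<Rightarrow> real \<Rightarrow> (nat \<Rightarrow> real) \<Rightarrow> real" where
  "Rq N \<eta> K TL TR E = (\<Sum>i=1..N-1. rateR K (E i) (E (Suc i)) * (Ix N \<eta> i E * (2/(1 + ee N \<eta> N)) - Dx N \<eta> i E))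
     + rateR K TL (E 1) * (XB N \<eta> TL 1 - Db N \<eta> 1 E) + rateR K (E N) TR * (XB N \<eta> TR N - Db N \<eta> N E)"

lemma XB_nonneg: "0 < T \<Longrightarrow> 1 + ee N \<eta> N > 0 \<Longrightarrow> 0 \<le> XB N \<eta> T j"
  unfolding XB_def using cb_nonneg[of N j] by (intro add_nonneg_nonneg mult_nonneg_nonneg divide_nonneg_pos) auto

lemma ex_int:
  assumes pos: "posE N E" and i: "1 \<le> i" "Suc i \<le> N" and eta: "0 < \<eta>" "\<eta> < 1/2" and c: "0 \<le> c"
  shows "(\<integral>\<^sup>+ p \<in> {0<..<1}. ennreal (Vfun N \<eta> (E(i := p * (E i + E (Suc i)), Suc i := (1 - p) * (E i + E (Suc i)))) + c) \<partial>lborel)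
     \<le> ennreal (Vfun N \<eta> E + c + (Ix N \<eta> i E * (2/(1 + ee N \<eta> N)) - Dx N \<eta> i E))"
proof -
  have N1: "1 \<le> N" using i by simp
  note eep = ee_props[OF N1 order.refl eta]
  have "(\<integral>\<^sup>+ p \<in> {0<..<1}. ennreal (Vfun N \<eta> (E(i := p * (E i + E (Suc i)), Suc i := (1 - p) * (E i + E (Suc i)))) + c) \<partial>lborel)
     \<le> (\<integral>\<^sup>+ p \<in> {0<..<1}. ennreal ((Vfun N \<eta> E - Dx N \<eta> i E + c) + Ix N \<eta> i E * (p powr (- (- ee N \<eta> N)) + (1-p) powr (- (- ee N \<eta> N)))) \<partial>lborel)"
  proof (intro nn_integral_mono)
    fix p :: real
    show "ennreal (Vfun N \<eta> (E(i := p * (E i + E (Suc i)), Suc i := (1 - p) * (E i + E (Suc i)))) + c) * indicator {0<..<1} p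
       \<le> ennreal ((Vfun N \<eta> E - Dx N \<eta> i E + c) + Ix N \<eta> i E * (p powr (- (- ee N \<eta> N)) + (1-p) powr (- (- ee N \<eta> N)))) * indicator {0<..<1} p"
    proof (cases "0 < p \<and> p < 1")
      case True
      have "Vfun N \<eta> (exE i p E) + c \<le> (Vfun N \<eta> E - Dx N \<eta> i E + c) + Ix N \<eta> i E * (p powr (- (- ee N \<eta> N)) + (1-p) powr (- (- ee N \<eta> N)))"
        using ex_V[OF pos i _ _ eta, of p] True by simp
      then show ?thesis using True unfolding exE_def by (auto intro!: ennreal_leI)
    qed auto
  qed
  also have "\<dots> \<le> ennreal ((Vfun N \<eta> E - Dx N \<eta> i E + c) + Ix N \<eta> i E * (2 / (1 - (- ee N \<eta> N))))"
    using eep Dx_le[of N \<eta> i E] c Ix_nonneg[of N \<eta> i E] by (intro int_p2) auto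
  also have "\<dots> = ennreal (Vfun N \<eta> E + c + (Ix N \<eta> i E * (2/(1 + ee N \<eta> N)) - Dx N \<eta> i E))"
    by (simp add: algebra_simps)
  finally show ?thesis .
qed

lemma bath_int:
  assumes pos: "posE N E" and j: "1 \<le> j" "j \<le> N" and eta: "0 < \<eta>" "\<eta> < 1/2" and c: "0 \<le> c" and T: "0 < T"
  shows "(\<integral>\<^sup>+ x. ennreal (exponential_density (1 / T) x) * (\<integral>\<^sup>+ p \<in> {0<..<1}. ennreal (Vfun N \<eta> (E(j := p * (E j + x))) + c) \<partial>lborel) \<partial>lborel)
     \<le> ennreal (Vfun N \<eta> E + c + (XB N \<eta> T j - Db N \<eta> j E))"
proof -
  have N1: "1 \<le> N" using j by simp
  note eep = ee_props[OF N1 order.refl eta]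
  define C0 where "C0 = Vfun N \<eta> E - Db N \<eta> j E + c"
  define C2 where "C2 = cb N j * (2/(1 + ee N \<eta> N))"
  have C0: "0 \<le> C0" using Db_le[of N \<eta> j E] c by (simp add: C0_def)
  have C2: "0 \<le> C2" using cb_nonneg[of N j] eep by (simp add: C2_def)
  have "(\<integral>\<^sup>+ x. ennreal (exponential_density (1 / T) x) * (\<integral>\<^sup>+ p \<in> {0<..<1}. ennreal (Vfun N \<eta> (E(j := p * (E j + x))) + c) \<partial>lborel) \<partial>lborel)
     \<le> (\<integral>\<^sup>+ x. ennreal (exponential_density (1 / T) x) * ennreal (C0 + C2 * (x powr (- (- ee N \<eta> N)) + 1)) \<partial>lborel)"
  proof (intro nn_integral_mono_AE)
    show "AE x in lborel. ennreal (exponential_density (1 / T) x) * (\<integral>\<^sup>+ p \<in> {0<..<1}. ennreal (Vfun N \<eta> (E(j := p * (E j + x))) + c) \<partial>lborel)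
       \<le> ennreal (exponential_density (1 / T) x) * ennreal (C0 + C2 * (x powr (- (- ee N \<eta> N)) + 1))"
      using AE_lborel_singleton[of 0]
    proof (rule eventually_mono)
      fix x :: real assume x0: "x \<noteq> 0"
      show "ennreal (exponential_density (1 / T) x) * (\<integral>\<^sup>+ p \<in> {0<..<1}. ennreal (Vfun N \<eta> (E(j := p * (E j + x))) + c) \<partial>lborel)
       \<le> ennreal (exponential_density (1 / T) x) * ennreal (C0 + C2 * (x powr (- (- ee N \<eta> N)) + 1))"
      proof (cases "x < 0")
        case True then show ?thesis by (simp add: exponential_density_def)
      next
        case False
        then have x: "0 < x" using x0 by simp
        have xx: "0 \<le> x powr ee N \<eta> N + 1" by (simp add: add_nonneg_nonneg)
        have "(\<integral>\<^sup>+ p \<in> {0<..<1}. ennreal (Vfun N \<eta> (E(j := p * (E j + x))) + c) \<partial>lborel)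
          \<le> (\<integral>\<^sup>+ p \<in> {0<..<1}. ennreal (C0 + (cb N j * (x powr ee N \<eta> N + 1)) * p powr (- (- ee N \<eta> N))) \<partial>lborel)"
        proof (intro nn_integral_mono)
          fix p :: real
          show "ennreal (Vfun N \<eta> (E(j := p * (E j + x))) + c) * indicator {0<..<1} p
             \<le> ennreal (C0 + (cb N j * (x powr ee N \<eta> N + 1)) * p powr (- (- ee N \<eta> N))) * indicator {0<..<1} p"
          proof (cases "0 < p \<and> p < 1")
            case True
            have "Vfun N \<eta> (E(j := p * (E j + x))) + c \<le> C0 + (cb N j * (x powr ee N \<eta> N + 1)) * p powr (- (- ee N \<eta> N))"
              using bath_V[OF pos j _ _ x eta, of p] True by (simp add: C0_def algebra_simps)
            then show ?thesis using True by (auto intro!: ennreal_leI)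
          qed auto
        qed
        also have "\<dots> \<le> ennreal (C0 + (cb N j * (x powr ee N \<eta> N + 1)) * (2 / (1 - (- ee N \<eta> N))))"
          using eep C0 cb_nonneg[of N j] xx by (intro int_p1) auto
        also have "(cb N j * (x powr ee N \<eta> N + 1)) * (2 / (1 - (- ee N \<eta> N))) = C2 * (x powr (- (- ee N \<eta> N)) + 1)"
          unfolding C2_def minus_minus diff_minus_eq_add by (simp only: mult.assoc mult.commute mult.left_commute)
        finally show ?thesis by (rule mult_left_mono) simp
      qed
    qed
  qed
  also have "\<dots> \<le> ennreal (C0 + 2 * C2 + C2 * (1/T) / (1 - (- ee N \<eta> N)))"
    using eep C0 C2 T by (intro int_x) auto
  also have "\<dots> = ennreal (Vfun N \<eta> E + c + (XB N \<eta> T j - Db N \<eta> j E))"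
    by (simp add: C0_def C2_def XB_def algebra_simps)
  finally show ?thesis .
qed

lemma combine:
  fixes r Y :: "nat \<Rightarrow> real" and I :: "nat \<Rightarrow> ennreal"
  assumes S: "finite S" and r: "\<And>i. i \<in> S \<Longrightarrow> 0 \<le> r i" and I: "\<And>i. i \<in> S \<Longrightarrow> I i \<le> ennreal (Y i)"
    and Y: "\<And>i. i \<in> S \<Longrightarrow> 0 \<le> Y i"
    and rL: "0 \<le> rL" "IL \<le> ennreal YL" "0 \<le> YL" and rR: "0 \<le> rR" "IR \<le> ennreal YR" "0 \<le> YR"
    and L: "0 < L" "0 \<le> L - ((\<Sum>i\<in>S. r i) + rL + rR)" and W: "0 \<le> W"
  shows "ennreal (1/L) * ((\<Sum>i\<in>S. ennreal (r i) * I i) + ennreal rL * IL + ennreal rR * IR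
            + ennreal (L - ((\<Sum>i\<in>S. r i) + rL + rR)) * ennreal W)
         \<le> ennreal (W + ((\<Sum>i\<in>S. r i * (Y i - W)) + rL * (YL - W) + rR * (YR - W)) / L)"
proof -
  define tot where "tot = (\<Sum>i\<in>S. r i) + rL + rR"
  have "ennreal (1/L) * ((\<Sum>i\<in>S. ennreal (r i) * I i) + ennreal rL * IL + ennreal rR * IR
            + ennreal (L - tot) * ennreal W)
      \<le> ennreal (1/L) * ((\<Sum>i\<in>S. ennreal (r i * Y i)) + ennreal (rL * YL) + ennreal (rR * YR)
            + ennreal ((L - tot) * W))"
  proof (intro mult_left_mono add_mono sum_mono order.refl)
    fix i assume i: "i \<in> S"
    have "ennreal (r i) * I i \<le> ennreal (r i) * ennreal (Y i)" using I[OF i] by (intro mult_left_mono) auto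
    also have "\<dots> = ennreal (r i * Y i)" using r[OF i] Y[OF i] by (simp add: ennreal_mult)
    finally show "ennreal (r i) * I i \<le> ennreal (r i * Y i)" .
  next
    have "ennreal rL * IL \<le> ennreal rL * ennreal YL" using rL by (intro mult_left_mono) auto
    also have "\<dots> = ennreal (rL * YL)" using rL by (simp add: ennreal_mult)
    finally show "ennreal rL * IL \<le> ennreal (rL * YL)" .
  next
    have "ennreal rR * IR \<le> ennreal rR * ennreal YR" using rR by (intro mult_left_mono) auto
    also have "\<dots> = ennreal (rR * YR)" using rR by (simp add: ennreal_mult)
    finally show "ennreal rR * IR \<le> ennreal (rR * YR)" .
  next
    show "ennreal (L - tot) * ennreal W \<le> ennreal ((L - tot) * W)"
      using L W by (simp add: ennreal_mult tot_def)
  qed auto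
  also have "(\<Sum>i\<in>S. ennreal (r i * Y i)) = ennreal (\<Sum>i\<in>S. r i * Y i)"
    using r Y by (intro sum_ennreal) auto
  also have "ennreal (\<Sum>i\<in>S. r i * Y i) + ennreal (rL * YL) + ennreal (rR * YR) + ennreal ((L - tot) * W)
      = ennreal ((\<Sum>i\<in>S. r i * Y i) + rL * YL + rR * YR + (L - tot) * W)"
    using r Y rL rR L W by (simp add: ennreal_plus sum_nonneg tot_def)
  also have "ennreal (1/L) * \<dots> = ennreal (((\<Sum>i\<in>S. r i * Y i) + rL * YL + rR * YR + (L - tot) * W) / L)"
    using r Y rL rR L W by (subst ennreal_mult[symmetric]) (auto simp: sum_nonneg tot_def)
  also have "((\<Sum>i\<in>S. r i * Y i) + rL * YL + rR * YR + (L - tot) * W) / L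
      = W + ((\<Sum>i\<in>S. r i * (Y i - W)) + rL * (YL - W) + rR * (YR - W)) / L"
  proof -
    have "(\<Sum>i\<in>S. r i * Y i) = (\<Sum>i\<in>S. r i * W + r i * (Y i - W))"
      by (intro sum.cong) (auto simp: algebra_simps)
    also have "\<dots> = (\<Sum>i\<in>S. r i) * W + (\<Sum>i\<in>S. r i * (Y i - W))"
      by (simp add: sum.distrib sum_distrib_right)
    finally have "(\<Sum>i\<in>S. r i * Y i) = (\<Sum>i\<in>S. r i) * W + (\<Sum>i\<in>S. r i * (Y i - W))" .
    then show ?thesis using L by (simp add: tot_def field_simps)
  qed
  finally show ?thesis unfolding tot_def .
qed

lemma Qop_bound:
  assumes pos: "posE N E" and N1: "1 \<le> N" and eta: "0 < \<eta>" "\<eta> < 1/2" and K: "1 \<le> K"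
    and T: "0 < TL" "0 < TR" and c: "0 \<le> c"
  shows "Qop N K TL TR (\<lambda>F. ennreal (Vfun N \<eta> F + c)) E \<le> ennreal (Vfun N \<eta> E + c + Rq N \<eta> K TL TR E / Lam N K)"
proof -
  note eep = ee_props[OF N1 order.refl eta]
  have L: "0 < Lam N K" using K by (simp add: Lam_def)
  have E1: "0 < E 1" "0 < E N" using pos N1 by (auto simp: posE_def)
  have Ln: "0 \<le> Lam N K - total_rate N K TL TR E" using total_rate_le[of K N] K N1 by simp
  have cf: "0 \<le> 2 / (1 + ee N \<eta> N)" using eep by simp
  have "Qop N K TL TR (\<lambda>F. ennreal (Vfun N \<eta> F + c)) E
     \<le> ennreal (Vfun N \<eta> E + c + ((\<Sum>i=1..N-1. rateR K (E i) (E (Suc i)) * ((Vfun N \<eta> E + c + (Ix N \<eta> i E * (2/(1 + ee N \<eta> N)) - Dx N \<eta> i E)) - (Vfun N \<eta> E + c)))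
         + rateR K TL (E 1) * ((Vfun N \<eta> E + c + (XB N \<eta> TL 1 - Db N \<eta> 1 E)) - (Vfun N \<eta> E + c))
         + rateR K (E N) TR * ((Vfun N \<eta> E + c + (XB N \<eta> TR N - Db N \<eta> N E)) - (Vfun N \<eta> E + c))) / Lam N K)"
    unfolding Qop_def total_rate_def
  proof (rule combine[where Y = "\<lambda>i. Vfun N \<eta> E + c + (Ix N \<eta> i E * (2/(1 + ee N \<eta> N)) - Dx N \<eta> i E)"])
    show "finite {1..N-1}" by simp
    fix i assume i: "i \<in> {1..N-1}"
    have Ei: "0 < E i" "0 < E (Suc i)" using pos i by (auto simp: posE_def)
    show "0 \<le> rateR K (E i) (E (Suc i))" using Ei K by (intro rateR_nonneg) auto
    show "(\<integral>\<^sup>+ p \<in> {0<..<1}. ennreal (Vfun N \<eta> (E(i := p * (E i + E (Suc i)), Suc i := (1 - p) * (E i + E (Suc i)))) + c) \<partial>lborel)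
       \<le> ennreal (Vfun N \<eta> E + c + (Ix N \<eta> i E * (2/(1 + ee N \<eta> N)) - Dx N \<eta> i E))"
      using i by (intro ex_int[OF pos _ _ eta c]) auto
    show "0 \<le> Vfun N \<eta> E + c + (Ix N \<eta> i E * (2/(1 + ee N \<eta> N)) - Dx N \<eta> i E)"
      using Dx_le[of N \<eta> i E] Ix_nonneg[of N \<eta> i E] cf c by (smt (verit) mult_nonneg_nonneg)
  next
    show "0 \<le> rateR K TL (E 1)" "0 \<le> rateR K (E N) TR" using E1 T K by (auto intro!: rateR_nonneg)
    show "(\<integral>\<^sup>+ x. ennreal (exponential_density (1 / TL) x) * (\<integral>\<^sup>+ p \<in> {0<..<1}. ennreal (Vfun N \<eta> (E(1 := p * (E 1 + x))) + c) \<partial>lborel) \<partial>lborel)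
       \<le> ennreal (Vfun N \<eta> E + c + (XB N \<eta> TL 1 - Db N \<eta> 1 E))"
      using N1 T by (intro bath_int[OF pos _ _ eta c]) auto
    show "(\<integral>\<^sup>+ x. ennreal (exponential_density (1 / TR) x) * (\<integral>\<^sup>+ p \<in> {0<..<1}. ennreal (Vfun N \<eta> (E(N := p * (E N + x))) + c) \<partial>lborel) \<partial>lborel)
       \<le> ennreal (Vfun N \<eta> E + c + (XB N \<eta> TR N - Db N \<eta> N E))"
      using N1 T by (intro bath_int[OF pos _ _ eta c]) auto
    show "0 \<le> Vfun N \<eta> E + c + (XB N \<eta> TL 1 - Db N \<eta> 1 E)" "0 \<le> Vfun N \<eta> E + c + (XB N \<eta> TR N - Db N \<eta> N E)"
      using Db_le[of N \<eta> 1 E] Db_le[of N \<eta> N E] XB_nonneg[of TL N \<eta> 1] XB_nonneg[of TR N \<eta> N] T eep c by auto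
    show "0 < Lam N K" by (rule L)
    show "0 \<le> Lam N K - ((\<Sum>i = 1..N - 1. rateR K (E i) (E (Suc i))) + rateR K TL (E 1) + rateR K (E N) TR)"
      using Ln by (simp add: total_rate_def)
    show "0 \<le> Vfun N \<eta> E + c" using c by (simp add: Vfun_Bl split_def sum_nonneg Vm_nonneg)
  qed
  also have "\<dots> = ennreal (Vfun N \<eta> E + c + Rq N \<eta> K TL TR E / Lam N K)"
    by (simp add: Rq_def)
  finally show ?thesis .
qed

definition gam :: "nat \<Rightarrow> real \<Rightarrow> nat \<Rightarrow> real" where
  "gam N \<eta> m = (ee N \<eta> m + 1/2) / ee N \<eta> (Suc m)"

definition GG :: "nat \<Rightarrow> real \<Rightarrow> real \<Rightarrow> real" where
  "GG N \<eta> V = (\<Sum>m\<in>{1..<N}. V powr gam N \<eta> m)"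

lemma aff_enlarged:
  assumes "1 \<le> i" "Suc i \<le> N" "(m,k) \<in> Bl N" "affx i m k"
  shows "(Suc m, if k \<le> i then k else i) \<in> Bl N" "m < N"
    "(if k \<le> i then k else i) \<le> i" "i < (if k \<le> i then k else i) + Suc m"
  using assms unfolding Bl_def affx_def by auto

lemma sqrt_powr_mult:
  assumes "0 < x" shows "sqrt x * x powr e = x powr (e + 1/2)"
  using assms by (simp add: powr_add powr_half_sqrt[symmetric] mult.commute)

lemma rIx:
  assumes pos: "posE N E" and i: "1 \<le> i" "Suc i \<le> N" and eta: "0 < \<eta>" "\<eta> < 1/2"
  shows "rateR K (E i) (E (Suc i)) * Ix N \<eta> i E \<le> real (card (Bl N)) * (2 * GG N \<eta> (Vfun N \<eta> E))"
proof -
  have N1: "1 \<le> N" using i by simp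
  let ?r = "rateR K (E i) (E (Suc i))"
  let ?V = "Vfun N \<eta> E"
  have r0: "?r \<le> sqrt (E i)" by (rule rateR_le_sqrt)
  have Ei: "0 < E i" using pos i by (auto simp: posE_def)
  have "?r * Ix N \<eta> i E = (\<Sum>(m,k)\<in>Bl N. ?r * (if affx i m k then 2 * bs E (Suc m) (if k \<le> i then k else i) powr (ee N \<eta> m) else 0))"
    unfolding Ix_def by (simp add: sum_distrib_left split_def)
  also have "\<dots> \<le> (\<Sum>(m,k)\<in>Bl N. 2 * GG N \<eta> ?V)"
  proof (intro sum_mono)
    fix b assume b: "b \<in> Bl N"
    obtain m k where mk: "b = (m,k)" by (cases b)
    show "(case b of (m,k) \<Rightarrow> ?r * (if affx i m k then 2 * bs E (Suc m) (if k \<le> i then k else i) powr (ee N \<eta> m) else 0))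
        \<le> (case b of (m,k) \<Rightarrow> 2 * GG N \<eta> ?V)"
    proof (cases "affx i m k")
      case False
      have "0 \<le> GG N \<eta> ?V" unfolding GG_def by (auto intro!: sum_nonneg)
      then show ?thesis using False mk by simp
    next
      case True
      define k' where "k' = (if k \<le> i then k else i)"
      note en = aff_enlarged[OF i b[unfolded mk] True, folded k'_def]
      have m1: "1 \<le> m" using b mk by (auto simp: Bl_def)
      define x where "x = bs E (Suc m) k'"
      have x: "0 < x" unfolding x_def using bs_pos[OF pos en(1)] .
      have Ex: "E i \<le> x" unfolding x_def using bs_ge[OF pos en(1) en(3) en(4)] .
      have rx: "?r \<le> sqrt x" using r0 Ex real_sqrt_le_mono by (meson order_trans)
      note e1 = ee_props[OF m1 less_imp_le[OF en(2)] eta]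
      note e2 = ee_props[of "Suc m" N, OF _ _ eta]
      have e2': "ee N \<eta> (Suc m) < 0" using e2(2) en(2) by simp
      have VV: "x powr ee N \<eta> (Suc m) \<le> ?V"
        using V_ge_Vm[OF en(1), of \<eta> E] by (simp add: Vm_bs ee_def x_def)
      have Vpos: "0 < ?V" using VV x by (smt (verit) powr_gt_zero)
      have "?r * (2 * x powr ee N \<eta> m) \<le> sqrt x * (2 * x powr ee N \<eta> m)"
        using rx by (intro mult_right_mono) auto
      also have "\<dots> = 2 * x powr (ee N \<eta> m + 1/2)" using sqrt_powr_mult[OF x] by simp
      also have "\<dots> \<le> 2 * ?V powr gam N \<eta> m"
        using powr_transfer[OF x Vpos e2' _ VV, of "ee N \<eta> m + 1/2"] e1 by (simp add: gam_def)
      also have "\<dots> \<le> 2 * GG N \<eta> ?V"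
        unfolding GG_def using m1 en(2) by (intro mult_left_mono member_le_sum) auto
      finally show ?thesis using True mk by (simp add: k'_def x_def)
    qed
  qed
  also have "\<dots> = real (card (Bl N)) * (2 * GG N \<eta> ?V)" by simp
  finally show ?thesis .
qed

definition Dec :: "nat \<Rightarrow> real \<Rightarrow> real \<Rightarrow> real \<Rightarrow> real \<Rightarrow> (nat \<Rightarrow> real) \<Rightarrow> real" where
  "Dec N \<eta> K TL TR E = (\<Sum>i=1..N-1. rateR K (E i) (E (Suc i)) * Dx N \<eta> i E)
     + rateR K TL (E 1) * Db N \<eta> 1 E + rateR K (E N) TR * Db N \<eta> N E"

lemma Rq_upper:
  assumes pos: "posE N E" and N1: "1 \<le> N" and eta: "0 < \<eta>" "\<eta> < 1/2" and T: "0 < TL" "0 < TR"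
  shows "Rq N \<eta> K TL TR E \<le> real (N-1) * ((2/(1 + ee N \<eta> N)) * (real (card (Bl N)) * (2 * GG N \<eta> (Vfun N \<eta> E))))
           + sqrt TL * XB N \<eta> TL 1 + sqrt TR * XB N \<eta> TR N - Dec N \<eta> K TL TR E"
proof -
  note eep = ee_props[OF N1 order.refl eta]
  let ?cf = "2/(1 + ee N \<eta> N)"
  have cf: "0 \<le> ?cf" using eep by simp
  have "(\<Sum>i=1..N-1. rateR K (E i) (E (Suc i)) * (Ix N \<eta> i E * ?cf - Dx N \<eta> i E))
      = (\<Sum>i=1..N-1. ?cf * (rateR K (E i) (E (Suc i)) * Ix N \<eta> i E)) - (\<Sum>i=1..N-1. rateR K (E i) (E (Suc i)) * Dx N \<eta> i E)"
    by (simp add: sum_subtractf[symmetric] algebra_simps)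
  also have "(\<Sum>i=1..N-1. ?cf * (rateR K (E i) (E (Suc i)) * Ix N \<eta> i E))
      \<le> (\<Sum>i=1..N-1. ?cf * (real (card (Bl N)) * (2 * GG N \<eta> (Vfun N \<eta> E))))"
    using cf by (intro sum_mono mult_left_mono rIx[OF pos _ _ eta]) auto
  also have "\<dots> = real (N-1) * (?cf * (real (card (Bl N)) * (2 * GG N \<eta> (Vfun N \<eta> E))))" by simp
  finally have A: "(\<Sum>i=1..N-1. rateR K (E i) (E (Suc i)) * (Ix N \<eta> i E * ?cf - Dx N \<eta> i E))
     \<le> real (N-1) * (?cf * (real (card (Bl N)) * (2 * GG N \<eta> (Vfun N \<eta> E)))) - (\<Sum>i=1..N-1. rateR K (E i) (E (Suc i)) * Dx N \<eta> i E)"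
    by simp
  have BL: "rateR K TL (E 1) * XB N \<eta> TL 1 \<le> sqrt TL * XB N \<eta> TL 1"
    using XB_nonneg[of TL N \<eta> 1] T eep rateR_le_sqrt(1)[of K TL "E 1"] by (intro mult_right_mono) auto
  have BR: "rateR K (E N) TR * XB N \<eta> TR N \<le> sqrt TR * XB N \<eta> TR N"
    using XB_nonneg[of TR N \<eta> N] T eep rateR_le_sqrt(2)[of K "E N" TR] by (intro mult_right_mono) auto
  show ?thesis using A BL BR unfolding Rq_def Dec_def by (simp add: algebra_simps)
qed

definition WW :: "nat \<Rightarrow> real \<Rightarrow> (nat \<Rightarrow> real) \<Rightarrow> real" where
  "WW N \<eta> E = Max ((\<lambda>(m,k). Vm N \<eta> m k E) ` Bl N)"

lemma Bl_ne: "1 \<le> N \<Longrightarrow> (1,1) \<in> Bl N" unfolding Bl_def by auto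

lemma WW_ge: "(m,k) \<in> Bl N \<Longrightarrow> Vm N \<eta> m k E \<le> WW N \<eta> E"
  unfolding WW_def by (rule Max_ge) force+

lemma V_le_WW: "Vfun N \<eta> E \<le> real (card (Bl N)) * WW N \<eta> E"
  unfolding Vfun_Bl using WW_ge[of _ _ N \<eta> E] by (intro sum_bounded_above) auto

lemma WW_attained: "1 \<le> N \<Longrightarrow> \<exists>m k. (m,k) \<in> Bl N \<and> Vm N \<eta> m k E = WW N \<eta> E"
proof -
  assume N1: "1 \<le> N"
  have "WW N \<eta> E \<in> ((\<lambda>(m,k). Vm N \<eta> m k E) ` Bl N)"
    unfolding WW_def using Bl_ne[OF N1] by (intro Max_in) auto
  then show ?thesis by force
qed

lemma Dec_nonneg:
  assumes pos: "posE N E" and N1: "1 \<le> N" and K: "0 \<le> K" and T: "0 < TL" "0 < TR"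
  shows "0 \<le> Dec N \<eta> K TL TR E"
proof -
  have E1: "0 < E 1" "0 < E N" using pos N1 by (auto simp: posE_def)
  show ?thesis unfolding Dec_def using pos K T E1 Dx_le Db_le
    by (intro add_nonneg_nonneg sum_nonneg mult_nonneg_nonneg rateR_nonneg) (auto simp: posE_def)
qed

lemma ee1: "ee N \<eta> 1 = \<eta> - 1"
  unfolding ee_def a_exp_def by simp

lemma rate_lower:
  assumes "\<rho> \<le> K" "\<rho> \<le> sqrt a" "\<rho> \<le> sqrt b"
  shows "\<rho> \<le> rateR K a b"
  using assms unfolding rateR_def by (auto simp: min_def)

lemma T_bound:
  fixes W T e :: real
  assumes T: "0 < T" and W: "max 1 (1/T) \<le> W" and e: "-1 < e" "e < 0"
  shows "W powr (1/e) \<le> T"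
proof -
  have W1: "1 \<le> W" using W by simp
  have ie: "1/e \<le> 0" using e by (simp add: divide_nonpos_neg less_imp_le)
  show ?thesis
  proof (cases "1 \<le> T")
    case True
    have "W powr (1/e) \<le> W powr 0" using W1 ie by (intro powr_mono) auto
    then show ?thesis using True W1 by simp
  next
    case False
    have TW: "1/T \<le> W" using W by simp
    have "W powr (1/e) \<le> (1/T) powr (1/e)" using TW T ie by (intro powr_mono2') auto
    also have "\<dots> = T powr (- (1/e))"
    proof -
      have a: "(1/T) powr (1/e) = 1 / T powr (1/e)" using T by (subst powr_divide) auto
      have b: "T powr (- (1/e)) = 1 / T powr (1/e)" by (simp add: powr_minus divide_inverse)
      show ?thesis using a b by simp
    qed
    also have "\<dots> \<le> T powr 1"
    proof (rule powr_mono')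
      have "1 \<le> - (1/e)" using e by (simp add: field_simps)
      then show "1 \<le> - (1/e)" .
    qed (use T False in auto)
    finally show ?thesis using T by simp
  qed
qed

lemma Dec_lower:
  assumes pos: "posE N E" and N1: "1 \<le> N" and eta: "0 < \<eta>" "\<eta> < 1/2" and K: "1 \<le> K"
    and T: "0 < TL" "0 < TR" and W: "max 1 (max (1/TL) (1/TR)) \<le> WW N \<eta> E"
  shows "WW N \<eta> E powr (1 - 1/(2*(1-\<eta>))) \<le> Dec N \<eta> K TL TR E"
proof -
  define W where "W = WW N \<eta> E"
  define e where "e = \<eta> - 1"
  have e: "-1 < e" "e < 0" using eta by (auto simp: e_def)
  have W1: "1 \<le> W" using W by (simp add: W_def)
  define \<rho> where "\<rho> = W powr ((1/e)/2)"
  have ie: "1/e \<le> 0" using e by (simp add: divide_nonpos_neg less_imp_le)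
  have rho_eq: "\<rho> = sqrt (W powr (1/e))" unfolding \<rho>_def using W1 by (intro powr_half_sqrt_powr) simp
  have rhoE: "\<rho> \<le> sqrt (E j)" if j: "j \<in> {1..N}" for j
  proof -
    have b: "(1,j) \<in> Bl N" using j by (auto simp: Bl_def)
    have x: "0 < E j" using pos j by (auto simp: posE_def)
    have "E j powr e \<le> W" using WW_ge[OF b, of \<eta> E] by (simp add: W_def Vm_bs bs_def a_exp_def e_def)
    then have "W powr (1/e) \<le> (E j powr e) powr (1/e)" using x ie by (intro powr_mono2') auto
    also have "\<dots> = E j" using x e by (simp add: powr_powr)
    finally have "W powr (1/e) \<le> E j" .
    then have "sqrt (W powr (1/e)) \<le> sqrt (E j)" by (rule real_sqrt_le_mono)
    then show ?thesis unfolding rho_eq .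
  qed
  have rhoK: "\<rho> \<le> K"
  proof -
    have "\<rho> \<le> W powr 0" unfolding \<rho>_def using W1 ie by (intro powr_mono) auto
    then show ?thesis using W1 K by simp
  qed
  have rhoT: "\<rho> \<le> sqrt T" if "T = TL \<or> T = TR" for T
  proof -
    have T0: "0 < T" using that T by auto
    have "max 1 (1/T) \<le> W" using W that by (auto simp: W_def)
    then have "W powr (1/e) \<le> T" by (intro T_bound[OF T0 _ e])
    then have "sqrt (W powr (1/e)) \<le> sqrt T" by (rule real_sqrt_le_mono)
    then show ?thesis unfolding rho_eq .
  qed
  have rhoW: "\<rho> * W = W powr (1 - 1/(2*(1-\<eta>)))"
  proof -
    have "\<rho> * W = W powr ((1/e)/2 + 1)" using W1 by (simp add: \<rho>_def powr_add)
    also have "(1/e)/2 + 1 = 1 - 1/(2*(1-\<eta>))" using e by (simp add: e_def field_simps)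
    finally show ?thesis .
  qed
  have rho0: "0 \<le> \<rho>" by (simp add: \<rho>_def)
  have E1: "0 < E 1" "0 < E N" using pos N1 by (auto simp: posE_def)
  have K0: "0 \<le> K" using K by simp
  have t1: "0 \<le> (\<Sum>i=1..N-1. rateR K (E i) (E (Suc i)) * Dx N \<eta> i E)"
    using pos K0 Dx_le by (intro sum_nonneg mult_nonneg_nonneg rateR_nonneg) (auto simp: posE_def)
  have t2: "0 \<le> rateR K TL (E 1) * Db N \<eta> 1 E" "0 \<le> rateR K (E N) TR * Db N \<eta> N E"
    using K0 T E1 Db_le by (auto intro!: mult_nonneg_nonneg rateR_nonneg)
  obtain m k where mk: "(m,k) \<in> Bl N" "Vm N \<eta> m k E = W"
    using WW_attained[OF N1, of \<eta> E] by (auto simp: W_def)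
  have m1: "1 \<le> m" "1 \<le> k" "k + m \<le> Suc N" "m \<le> N" using mk(1) by (auto simp: Bl_def)
  have "\<rho> * W \<le> Dec N \<eta> K TL TR E"
  proof (cases "k = 1")
    case True
    have "W \<le> Db N \<eta> 1 E"
    proof -
      have "(\<lambda>(m',k'). if k' \<le> 1 \<and> 1 < k'+m' then Vm N \<eta> m' k' E else 0) (m,k)
          \<le> (\<Sum>(m',k')\<in>Bl N. if k' \<le> 1 \<and> 1 < k'+m' then Vm N \<eta> m' k' E else 0)"
        by (rule member_le_sum) (auto simp: Vm_nonneg mk(1) split: prod.splits)
      then show ?thesis using mk(2) True m1 by (simp add: Db_def)
    qed
    moreover have "\<rho> \<le> rateR K TL (E 1)"
      using rhoK rhoT[of TL] rhoE[of 1] N1 by (intro rate_lower) auto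
    ultimately have "\<rho> * W \<le> rateR K TL (E 1) * Db N \<eta> 1 E"
      using rho0 W1 by (intro mult_mono) auto
    then show ?thesis using t1 t2 unfolding Dec_def by linarith
  next
    case False
    define i where "i = k - 1"
    have i: "1 \<le> i" "Suc i = k" "Suc i \<le> N" using False m1 by (auto simp: i_def)
    have aff: "affx i m k" using i m1 by (auto simp: affx_def)
    have "W \<le> Dx N \<eta> i E"
    proof -
      have "(\<lambda>(m',k'). if affx i m' k' then Vm N \<eta> m' k' E else 0) (m,k)
          \<le> (\<Sum>(m',k')\<in>Bl N. if affx i m' k' then Vm N \<eta> m' k' E else 0)"
        by (rule member_le_sum) (auto simp: Vm_nonneg mk(1) split: prod.splits)
      then show ?thesis using mk(2) aff by (simp add: Dx_def)
    qed
    moreover have "\<rho> \<le> rateR K (E i) (E (Suc i))"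
      using rhoK rhoE[of i] rhoE[of "Suc i"] i by (intro rate_lower) auto
    ultimately have "\<rho> * W \<le> rateR K (E i) (E (Suc i)) * Dx N \<eta> i E"
      using rho0 W1 by (intro mult_mono) auto
    also have "\<dots> \<le> (\<Sum>i=1..N-1. rateR K (E i) (E (Suc i)) * Dx N \<eta> i E)"
      using i pos K0 Dx_le
      by (intro member_le_sum[of i "{1..N-1}" "\<lambda>i. rateR K (E i) (E (Suc i)) * Dx N \<eta> i E"] mult_nonneg_nonneg rateR_nonneg)
         (auto simp: posE_def)
    finally show ?thesis using t2 unfolding Dec_def by linarith
  qed
  then show ?thesis using rhoW by (simp add: W_def)
qed

lemma gam_bounds:
  assumes m: "1 \<le> m" "m < N" and eta: "0 < \<eta>" "\<eta> < 1/2^N"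
  shows "0 < gam N \<eta> m" "gam N \<eta> m < 1 - 1/(2*(1-\<eta>))"
proof -
  have N1: "1 \<le> N" using m by simp
  have h2: "(1::real)/2^N \<le> 1/2" using N1
    by (intro divide_left_mono) (auto simp: order_trans[OF _ power_increasing[of 1 N "2::real"]])
  have eta2: "0 < \<eta>" "\<eta> < 1/2" using eta h2 by linarith+
  note e1 = ee_props[OF m(1) less_imp_le[OF m(2)] eta2]
  note e2 = ee_props[of "Suc m" N, OF _ _ eta2]
  have e2': "ee N \<eta> (Suc m) < 0" using e2(2) m by simp
  show "0 < gam N \<eta> m" unfolding gam_def using e1 e2' by (intro divide_neg_neg) auto
  define t :: real where "t = 2^(m-1)"
  define D :: real where "D = 2^N - 1"
  have D: "0 < D" using N1 by (simp add: D_def one_less_power)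
  have t2: "(2::real)^(Suc m - 1) = 2 * t" using m by (cases m) (auto simp: t_def)
  have tN: "2 * t \<le> 2^N"
  proof -
    have "2 * t = 2^m" using m by (cases m) (auto simp: t_def)
    also have "(2::real)^m \<le> 2^N" using m by (intro power_increasing) auto
    finally show ?thesis .
  qed
  have ta: "2 * \<eta> * t < 1"
  proof -
    have "2 * t * \<eta> \<le> 2^N * \<eta>" using tN eta by (intro mult_right_mono) auto
    also have "\<dots> < 2^N * (1/2^N)" using eta by (intro mult_strict_left_mono) auto
    finally show ?thesis by (simp add: mult_ac)
  qed
  have eem: "ee N \<eta> m = \<eta> - \<eta> * (t - 1) / D - 1" unfolding ee_def a_exp_def t_def D_def by (simp add: algebra_simps)
  have eeS: "ee N \<eta> (Suc m) = \<eta> - \<eta> * (2*t - 1) / D - 1" unfolding ee_def a_exp_def D_def t2 by (simp add: algebra_simps)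
  have ident: "2*(1-\<eta>)*(ee N \<eta> m + 1/2) - (1-2*\<eta>)*ee N \<eta> (Suc m) = (\<eta>/D)*(1 - 2*\<eta>*t)"
    unfolding eem eeS using D by (simp add: field_simps)
  have pos: "0 < (\<eta>/D)*(1 - 2*\<eta>*t)" using D eta ta by simp
  have A: "(1 - 1/(2*(1-\<eta>))) = (1-2*\<eta>)/(2*(1-\<eta>))" using eta2 by (simp add: field_simps)
  have "(1-2*\<eta>)/(2*(1-\<eta>)) * ee N \<eta> (Suc m) < ee N \<eta> m + 1/2"
  proof -
    have "(1-2*\<eta>) * ee N \<eta> (Suc m) < 2*(1-\<eta>)*(ee N \<eta> m + 1/2)" using ident pos by linarith
    then have "(1-2*\<eta>) * ee N \<eta> (Suc m) / (2*(1-\<eta>)) < (2*(1-\<eta>)*(ee N \<eta> m + 1/2)) / (2*(1-\<eta>))"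
      using eta2 by (intro divide_strict_right_mono) auto
    then show ?thesis using eta2 by simp
  qed
  then show "gam N \<eta> m < 1 - 1/(2*(1-\<eta>))"
    unfolding gam_def A using e2' by (simp add: neg_divide_less_eq)
qed

lemma dom_ev:
  fixes C d \<epsilon> :: real
  assumes "0 < d" "0 < \<epsilon>"
  shows "eventually (\<lambda>V. C \<le> \<epsilon> * V powr d) at_top"
proof -
  define V0 where "V0 = max 1 ((\<bar>C\<bar>/\<epsilon>) powr (1/d))"
  have "\<forall>V\<ge>V0. C \<le> \<epsilon> * V powr d"
  proof (intro allI impI)
    fix V assume V: "V0 \<le> V"
    have V1: "1 \<le> V" using V by (simp add: V0_def)
    have "(\<bar>C\<bar>/\<epsilon>) powr (1/d) \<le> V" using V by (simp add: V0_def)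
    then have "((\<bar>C\<bar>/\<epsilon>) powr (1/d)) powr d \<le> V powr d" using assms by (intro powr_mono2) auto
    moreover have "((\<bar>C\<bar>/\<epsilon>) powr (1/d)) powr d = \<bar>C\<bar>/\<epsilon>"
    proof (cases "C = 0")
      case False
      then show ?thesis using assms by (simp add: powr_powr)
    qed simp
    ultimately have "\<bar>C\<bar>/\<epsilon> \<le> V powr d" by simp
    then have "\<bar>C\<bar> \<le> \<epsilon> * V powr d" using assms by (simp add: field_simps)
    then show "C \<le> \<epsilon> * V powr d" by linarith
  qed
  then show ?thesis by (auto simp: eventually_at_top_linorder)
qed

lemma dom_ev2:
  fixes C \<gamma> \<alpha> \<epsilon> :: real
  assumes "0 \<le> \<gamma>" "\<gamma> < \<alpha>" "0 < \<epsilon>"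
  shows "eventually (\<lambda>V. C * V powr \<gamma> \<le> \<epsilon> * V powr \<alpha>) at_top"
proof -
  have "eventually (\<lambda>V. C \<le> \<epsilon> * V powr (\<alpha> - \<gamma>)) at_top" using assms by (intro dom_ev) auto
  moreover have "eventually (\<lambda>V::real. 0 < V) at_top" by (rule eventually_gt_at_top)
  ultimately show ?thesis
  proof eventually_elim
    case (elim V)
    have "C * V powr \<gamma> \<le> (\<epsilon> * V powr (\<alpha> - \<gamma>)) * V powr \<gamma>" using elim by (intro mult_right_mono) auto
    also have "\<dots> = \<epsilon> * V powr \<alpha>" using elim by (simp add: powr_add[symmetric] mult.assoc)
    finally show ?case .
  qed
qed

lemma Vfun_nonneg: "0 \<le> Vfun N \<eta> E"
  unfolding Vfun_Bl split_def by (auto intro!: sum_nonneg simp: Vm_nonneg)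

lemma drift:
  assumes N1: "1 \<le> N" and eta: "0 < \<eta>" "\<eta> < 1/2^N" and K: "1 \<le> K" and T: "0 < TL" "0 < TR"
  shows "\<exists>B0 Vb \<kappa>. 0 < \<kappa> \<and> \<kappa> \<le> 1/2 \<and> 1 \<le> Vb \<and> (\<forall>E. posE N E \<longrightarrow> Rq N \<eta> K TL TR E \<le> B0) \<and>
     (\<forall>E. posE N E \<and> Vb \<le> Vfun N \<eta> E \<longrightarrow> Rq N \<eta> K TL TR E \<le> - \<kappa> * Vfun N \<eta> E powr (1 - 1/(2*(1-\<eta>))))"
proof -
  define \<alpha> where "\<alpha> = 1 - 1/(2*(1-\<eta>))"
  have h2: "(1::real)/2^N \<le> 1/2" using N1
    by (intro divide_left_mono) (auto simp: order_trans[OF _ power_increasing[of 1 N "2::real"]])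
  have eta2: "0 < \<eta>" "\<eta> < 1/2" using eta h2 by linarith+
  have al: "0 < \<alpha>" using eta2 by (simp add: \<alpha>_def field_simps)
  note eep = ee_props[OF N1 order.refl eta2]
  define nb where "nb = real (card (Bl N))"
  have nb: "1 \<le> nb" using Bl_ne[OF N1] unfolding nb_def
    by (metis One_nat_def Suc_leI card_gt_0_iff empty_iff finite_Bl of_nat_1 of_nat_le_iff)
  define \<kappa> where "\<kappa> = (1/2) / nb powr \<alpha>"
  have ka: "0 < \<kappa>" using nb by (simp add: \<kappa>_def)
  have ka2: "\<kappa> \<le> 1/2"
  proof -
    have "1 \<le> nb powr \<alpha>" using nb al by (intro ge_one_powr_ge_zero) auto
    then have "1 / nb powr \<alpha> \<le> 1" by (simp add: divide_le_eq)
    then show ?thesis unfolding \<kappa>_def by simp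
  qed
  define cf where "cf = 2/(1 + ee N \<eta> N)"
  have cf: "0 \<le> cf" using eep by (simp add: cf_def)
  define CA where "CA = real (N-1) * (cf * (nb * 2))"
  define CB where "CB = sqrt TL * XB N \<eta> TL 1 + sqrt TR * XB N \<eta> TR N"
  have CA: "0 \<le> CA" using cf nb by (simp add: CA_def)
  have CB: "0 \<le> CB" using XB_nonneg[of TL N \<eta> 1] XB_nonneg[of TR N \<eta> N] T eep by (simp add: CB_def)
  have GG0: "0 \<le> GG N \<eta> V" for V unfolding GG_def by (auto intro!: sum_nonneg)
  have RU: "Rq N \<eta> K TL TR E \<le> CA * GG N \<eta> (Vfun N \<eta> E) + CB - Dec N \<eta> K TL TR E" if "posE N E" for E
    using Rq_upper[OF that N1 eta2 T, of K] by (simp add: CA_def CB_def cf_def nb_def algebra_simps)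
  define \<epsilon> where "\<epsilon> = \<kappa> / (2 * N)"
  have eps: "0 < \<epsilon>" using ka N1 by (simp add: \<epsilon>_def)
  have ev1: "eventually (\<lambda>V. \<forall>m\<in>{1..<N}. CA * V powr gam N \<eta> m \<le> \<epsilon> * V powr \<alpha>) at_top"
  proof (rule eventually_ball_finite)
    show "finite {1..<N}" by simp
    show "\<forall>m\<in>{1..<N}. eventually (\<lambda>V. CA * V powr gam N \<eta> m \<le> \<epsilon> * V powr \<alpha>) at_top"
    proof
      fix m assume m: "m \<in> {1..<N}"
      note g = gam_bounds[of m N \<eta>] 
      show "eventually (\<lambda>V. CA * V powr gam N \<eta> m \<le> \<epsilon> * V powr \<alpha>) at_top"
        using g m eta eps by (intro dom_ev2) (auto simp: \<alpha>_def less_imp_le)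
    qed
  qed
  have ev2: "eventually (\<lambda>V. CB \<le> (\<kappa>/2) * V powr \<alpha>) at_top" using al ka by (intro dom_ev) auto
  have "eventually (\<lambda>V. CA * GG N \<eta> V + CB \<le> \<kappa> * V powr \<alpha>) at_top"
    using ev1 ev2
  proof eventually_elim
    case (elim V)
    have "CA * GG N \<eta> V = (\<Sum>m\<in>{1..<N}. CA * V powr gam N \<eta> m)" by (simp add: GG_def sum_distrib_left)
    also have "\<dots> \<le> (\<Sum>m\<in>{1..<N}. \<epsilon> * V powr \<alpha>)" using elim(1) by (intro sum_mono) auto
    also have "\<dots> = real (N - 1) * (\<epsilon> * V powr \<alpha>)" by simp
    also have "\<dots> \<le> (\<kappa>/2) * V powr \<alpha>"
    proof -
      have "real (N-1) * \<epsilon> \<le> \<kappa>/2" using N1 ka unfolding \<epsilon>_def by (simp add: field_simps of_nat_diff)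
      then show ?thesis using mult_right_mono[of "real (N-1) * \<epsilon>" "\<kappa>/2" "V powr \<alpha>"] by (simp add: mult_ac)
    qed
    finally show ?case using elim(2) by linarith
  qed
  then obtain V1 where V1: "\<And>V. V1 \<le> V \<Longrightarrow> CA * GG N \<eta> V + CB \<le> \<kappa> * V powr \<alpha>"
    by (auto simp: eventually_at_top_linorder)
  define W0 where "W0 = max 1 (max (1/TL) (1/TR))"
  define Vb where "Vb = max (max V1 1) (nb * W0)"
  define B0 where "B0 = CA * GG N \<eta> Vb + CB"
  have Vb1: "1 \<le> Vb" by (simp add: Vb_def)
  have big: "Rq N \<eta> K TL TR E \<le> - \<kappa> * Vfun N \<eta> E powr \<alpha>" if E: "posE N E" "Vb \<le> Vfun N \<eta> E" for E
  proof -
    let ?V = "Vfun N \<eta> E"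
    have VW: "?V \<le> nb * WW N \<eta> E" using V_le_WW[of N \<eta> E] by (simp add: nb_def)
    have "nb * W0 \<le> nb * WW N \<eta> E" using E(2) VW by (simp add: Vb_def)
    then have W0W: "W0 \<le> WW N \<eta> E" using nb by simp
    have D: "WW N \<eta> E powr \<alpha> \<le> Dec N \<eta> K TL TR E"
      using Dec_lower[OF E(1) N1 eta2 K T] W0W by (simp add: W0_def \<alpha>_def)
    have V0: "0 \<le> ?V" by (rule Vfun_nonneg)
    have "(?V / nb) powr \<alpha> \<le> WW N \<eta> E powr \<alpha>"
      using VW nb V0 al by (intro powr_mono2) (auto simp: field_simps)
    also have "(?V / nb) powr \<alpha> = ?V powr \<alpha> / nb powr \<alpha>" using V0 nb by (simp add: powr_divide)
    finally have "?V powr \<alpha> / nb powr \<alpha> \<le> Dec N \<eta> K TL TR E" using D by simp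
    then have D2: "2 * \<kappa> * ?V powr \<alpha> \<le> Dec N \<eta> K TL TR E" by (simp add: \<kappa>_def)
    have "CA * GG N \<eta> ?V + CB \<le> \<kappa> * ?V powr \<alpha>" using E(2) by (intro V1) (simp add: Vb_def)
    then show ?thesis using RU[OF E(1)] D2 by linarith
  qed
  have "Rq N \<eta> K TL TR E \<le> B0" if E: "posE N E" for E
  proof (cases "Vb \<le> Vfun N \<eta> E")
    case True
    have "0 \<le> B0" using CA CB GG0 by (simp add: B0_def)
    moreover have "0 \<le> \<kappa> * Vfun N \<eta> E powr \<alpha>" using ka by simp
    ultimately show ?thesis using big[OF E True] by linarith
  next
    case False
    have "GG N \<eta> (Vfun N \<eta> E) \<le> GG N \<eta> Vb" unfolding GG_def
    proof (intro sum_mono powr_mono2)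
      fix m assume "m \<in> {1..<N}"
      then show "0 \<le> gam N \<eta> m" using gam_bounds[of m N \<eta>] eta by auto
    qed (use False Vfun_nonneg in auto)
    then have "CA * GG N \<eta> (Vfun N \<eta> E) \<le> CA * GG N \<eta> Vb" using CA by (intro mult_left_mono)
    moreover have "0 \<le> Dec N \<eta> K TL TR E" using Dec_nonneg[OF E N1 _ T] K by simp
    ultimately show ?thesis using RU[OF E] by (simp add: B0_def)
  qed
  then show ?thesis using big ka ka2 Vb1 unfolding \<alpha>_def by blast
qed

lemma Q_iter:
  assumes N1: "1 \<le> N" and eta: "0 < \<eta>" "\<eta> < 1/2" and K: "1 \<le> K" and T: "0 < TL" "0 < TR"
    and Bq: "0 \<le> Bq" and RB: "\<And>E. posE N E \<Longrightarrow> Rq N \<eta> K TL TR E / Lam N K \<le> Bq"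
  shows "posE N E \<Longrightarrow> ((Qop N K TL TR ^^ n) (\<lambda>F. ennreal (Vfun N \<eta> F))) E \<le> ennreal (Vfun N \<eta> E + real n * Bq)"
proof (induction n arbitrary: E)
  case 0
  then show ?case by simp
next
  case (Suc n)
  have "((Qop N K TL TR ^^ Suc n) (\<lambda>F. ennreal (Vfun N \<eta> F))) E
      = Qop N K TL TR ((Qop N K TL TR ^^ n) (\<lambda>F. ennreal (Vfun N \<eta> F))) E" by simp
  also have "\<dots> \<le> Qop N K TL TR (\<lambda>F. ennreal (Vfun N \<eta> F + real n * Bq)) E"
    using Suc K T N1 by (intro Qop_mono) auto
  also have "\<dots> \<le> ennreal (Vfun N \<eta> E + real n * Bq + Rq N \<eta> K TL TR E / Lam N K)"
    using Bq by (intro Qop_bound[OF Suc.prems N1 eta K T]) auto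
  also have "\<dots> \<le> ennreal (Vfun N \<eta> E + real (Suc n) * Bq)"
    using RB[OF Suc.prems] by (intro ennreal_leI) (simp add: algebra_simps)
  finally show ?case .
qed

theorem theorem4p1:
  fixes N :: nat and TL TR :: real
  assumes "N \<ge> 1" and "TL > 0" and "TR > 0"
  shows "\<exists>K0. \<forall>K \<ge> K0. \<exists>\<eta>0 > 0. \<forall>\<eta>. 0 < \<eta> \<and> \<eta> < \<eta>0 \<longrightarrow>
           (\<exists>h0 > 0. \<forall>h. 0 < h \<and> h < h0 \<longrightarrow>
             (\<exists>c0 > 0. \<exists>M0 > 1. \<forall>E :: nat \<Rightarrow> real.
                (\<forall>i \<in> {1..N}. E i > 0) \<and> Vfun N \<eta> E > M0 \<longrightarrow>
                Ph N K TL TR h (\<lambda>E'. ennreal (Vfun N \<eta> E')) E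
                  \<le> ennreal (Vfun N \<eta> E - c0 * Vfun N \<eta> E powr (1 - 1 / (2 * (1 - \<eta>))))))"
proof (rule exI[of _ 1], intro allI impI)
  fix K :: real assume K: "1 \<le> K"
  show "\<exists>\<eta>0 > 0. \<forall>\<eta>. 0 < \<eta> \<and> \<eta> < \<eta>0 \<longrightarrow>
           (\<exists>h0 > 0. \<forall>h. 0 < h \<and> h < h0 \<longrightarrow>
             (\<exists>c0 > 0. \<exists>M0 > 1. \<forall>E :: nat \<Rightarrow> real.
                (\<forall>i \<in> {1..N}. E i > 0) \<and> Vfun N \<eta> E > M0 \<longrightarrow>
                Ph N K TL TR h (\<lambda>E'. ennreal (Vfun N \<eta> E')) E
                  \<le> ennreal (Vfun N \<eta> E - c0 * Vfun N \<eta> E powr (1 - 1 / (2 * (1 - \<eta>))))))"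
  proof (rule exI[of _ "1/2^N"], intro conjI allI impI)
  show "0 < (1::real)/2^N" by simp
  fix \<eta> :: real assume eta0: "0 < \<eta> \<and> \<eta> < 1/2^N"
  have N1: "1 \<le> N" and T: "0 < TL" "0 < TR" using assms by auto
  have eta: "0 < \<eta>" "\<eta> < 1/2^N" using eta0 by auto
  have h2: "(1::real)/2^N \<le> 1/2" using N1
    by (intro divide_left_mono) (auto simp: order_trans[OF _ power_increasing[of 1 N "2::real"]])
  have eta2: "0 < \<eta>" "\<eta> < 1/2" using eta h2 by linarith+
  define \<alpha> where "\<alpha> = 1 - 1/(2*(1-\<eta>))"
  have al: "0 < \<alpha>" "\<alpha> \<le> 1" using eta2 by (simp_all add: \<alpha>_def field_simps)
  from drift[OF N1 eta K T] obtain B0 Vb \<kappa> where D0: "0 < \<kappa> \<and> \<kappa> \<le> 1/2 \<and> 1 \<le> Vb \<and> (\<forall>E. posE N E \<longrightarrow> Rq N \<eta> K TL TR E \<le> B0) \<and>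
     (\<forall>E. posE N E \<and> Vb \<le> Vfun N \<eta> E \<longrightarrow> Rq N \<eta> K TL TR E \<le> - \<kappa> * Vfun N \<eta> E powr (1 - 1/(2*(1-\<eta>))))"
    by (elim exE)
  have D: "0 < \<kappa>" "\<kappa> \<le> 1/2" "1 \<le> Vb"
      "\<And>E. posE N E \<Longrightarrow> Rq N \<eta> K TL TR E \<le> B0"
      "\<And>E. posE N E \<Longrightarrow> Vb \<le> Vfun N \<eta> E \<Longrightarrow> Rq N \<eta> K TL TR E \<le> - \<kappa> * Vfun N \<eta> E powr \<alpha>"
    using D0 unfolding \<alpha>_def by auto
  define L where "L = Lam N K"
  have L: "2 \<le> L"
  proof -
    have "(2::real) * 1 \<le> real (N + 1) * K" using K N1 by (intro mult_mono) auto
    then show ?thesis by (simp add: L_def Lam_def)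
  qed
  define Bq where "Bq = max 0 B0 / L"
  have Bq: "0 \<le> Bq" using L by (simp add: Bq_def)
  have RB: "Rq N \<eta> K TL TR E / Lam N K \<le> Bq" if "posE N E" for E
    using D(4)[OF that] L unfolding Bq_def L_def by (intro divide_right_mono) auto
  have iter: "((Qop N K TL TR ^^ n) (\<lambda>F. ennreal (Vfun N \<eta> F))) E \<le> ennreal (Vfun N \<eta> E + real n * Bq)"
    if "posE N E" for n E
    by (rule Q_iter[OF N1 eta2 K T Bq _ that]) (rule RB)
  show "\<exists>h0>0. \<forall>h. 0 < h \<and> h < h0 \<longrightarrow> (\<exists>c0>0. \<exists>M0>1. \<forall>E. (\<forall>i\<in>{1..N}. 0 < E i) \<and> M0 < Vfun N \<eta> E \<longrightarrow>
          Ph N K TL TR h (\<lambda>E'. ennreal (Vfun N \<eta> E')) E \<le> ennreal (Vfun N \<eta> E - c0 * Vfun N \<eta> E powr (1 - 1 / (2 * (1 - \<eta>)))))"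
  proof (rule exI[of _ 1], intro conjI allI impI)
    show "(0::real) < 1" by simp
    fix h :: real assume h: "0 < h \<and> h < 1"
    define x where "x = L * h"
    have x: "0 < x" using h L by (simp add: x_def)
    define w where "w n = exp (- x) * x ^ n / fact n" for n
    have w0: "0 \<le> w n" for n using x by (simp add: w_def)
    define c1 where "c1 = exp (- x) * h * \<kappa>"
    have c1: "0 < c1" using h D(1) by (simp add: c1_def)
    have "eventually (\<lambda>V. exp x * Bq \<le> (c1/2) * V powr \<alpha>) at_top"
      using al c1 by (intro dom_ev) auto
    then obtain V2 where V2: "\<And>V. V2 \<le> V \<Longrightarrow> exp x * Bq \<le> (c1/2) * V powr \<alpha>"
      by (auto simp: eventually_at_top_linorder)
    show "\<exists>c0>0. \<exists>M0>1. \<forall>E. (\<forall>i\<in>{1..N}. 0 < E i) \<and> M0 < Vfun N \<eta> E \<longrightarrow>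
          Ph N K TL TR h (\<lambda>E'. ennreal (Vfun N \<eta> E')) E \<le> ennreal (Vfun N \<eta> E - c0 * Vfun N \<eta> E powr (1 - 1 / (2 * (1 - \<eta>))))"
    proof (rule exI[of _ "c1/2"], rule conjI)
      show "0 < c1/2" using c1 by simp
      show "\<exists>M0>1. \<forall>E. (\<forall>i\<in>{1..N}. 0 < E i) \<and> M0 < Vfun N \<eta> E \<longrightarrow>
          Ph N K TL TR h (\<lambda>E'. ennreal (Vfun N \<eta> E')) E \<le> ennreal (Vfun N \<eta> E - c1/2 * Vfun N \<eta> E powr (1 - 1 / (2 * (1 - \<eta>))))"
      proof (rule exI[of _ "max (max Vb V2) 2"], intro conjI allI impI)
      show "1 < max (max Vb V2) (2::real)" by simp
      fix E :: "nat \<Rightarrow> real"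
      assume E: "(\<forall>i\<in>{1..N}. 0 < E i) \<and> max (max Vb V2) 2 < Vfun N \<eta> E"
      have pos: "posE N E" using E by (simp add: posE_def)
      define V where "V = Vfun N \<eta> E"
      have V: "Vb \<le> V" "V2 \<le> V" "1 \<le> V" using E by (auto simp: V_def)
      define \<delta> where "\<delta> = \<kappa> * V powr \<alpha> / L"
      have Va: "V powr \<alpha> \<le> V"
      proof -
        have "V powr \<alpha> \<le> V powr 1" using V al by (intro powr_mono) auto
        then show ?thesis using V by simp
      qed
      have del: "0 \<le> \<delta>" "\<delta> \<le> V" 
      proof -
        show "0 \<le> \<delta>" using D(1) L by (simp add: \<delta>_def)
        have "\<kappa> * V powr \<alpha> \<le> 1 * V" using D(1,2) Va V by (intro mult_mono) auto
        moreover have "\<kappa> * V powr \<alpha> / L \<le> \<kappa> * V powr \<alpha> / 1" using L D(1) by (intro divide_left_mono) auto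
        ultimately show "\<delta> \<le> V" unfolding \<delta>_def by simp
      qed
      define g where "g n = (if n = 1 then V - \<delta> else V + 2^n * Bq)" for n :: nat
      have g0: "0 \<le> g n" for n using del Bq V by (simp add: g_def)
      have hterm: "ennreal (exp (- Lam N K * h) * (Lam N K * h) ^ n / fact n) * ((Qop N K TL TR ^^ n) (\<lambda>E'. ennreal (Vfun N \<eta> E'))) E
          \<le> ennreal (w n * g n)" for n
      proof -
        have Q: "((Qop N K TL TR ^^ n) (\<lambda>E'. ennreal (Vfun N \<eta> E'))) E \<le> ennreal (g n)"
        proof (cases "n = 1")
          case True
          have "Qop N K TL TR (\<lambda>E'. ennreal (Vfun N \<eta> E' + 0)) E \<le> ennreal (V + 0 + Rq N \<eta> K TL TR E / Lam N K)"
            using Qop_bound[OF pos N1 eta2 K T, of 0] by (simp add: V_def)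
          also have "\<dots> \<le> ennreal (V - \<delta>)"
          proof (intro ennreal_leI)
            have "Rq N \<eta> K TL TR E \<le> - \<kappa> * V powr \<alpha>" using D(5)[OF pos] V by (simp add: V_def)
            then have "Rq N \<eta> K TL TR E / L \<le> (- \<kappa> * V powr \<alpha>) / L" using L by (intro divide_right_mono) auto
            then show "V + 0 + Rq N \<eta> K TL TR E / Lam N K \<le> V - \<delta>" by (simp add: \<delta>_def L_def)
          qed
          finally show ?thesis using True by (simp add: g_def)
        next
          case False
          have "((Qop N K TL TR ^^ n) (\<lambda>E'. ennreal (Vfun N \<eta> E'))) E \<le> ennreal (V + real n * Bq)"
            using iter[OF pos] by (simp add: V_def)
          also have "\<dots> \<le> ennreal (g n)"
          proof (intro ennreal_leI)
            have "real n \<le> 2^n" using less_exp[of n] by (metis of_nat_le_iff of_nat_numeral of_nat_power less_imp_le)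
            then have "real n * Bq \<le> 2^n * Bq" using Bq by (intro mult_right_mono) auto
            then show "V + real n * Bq \<le> g n" using False by (simp add: g_def)
          qed
          finally show ?thesis .
        qed
        have "ennreal (exp (- Lam N K * h) * (Lam N K * h) ^ n / fact n) = ennreal (w n)"
          by (simp add: w_def x_def L_def)
        then have "ennreal (exp (- Lam N K * h) * (Lam N K * h) ^ n / fact n) * ((Qop N K TL TR ^^ n) (\<lambda>E'. ennreal (Vfun N \<eta> E'))) E
            \<le> ennreal (w n) * ennreal (g n)" using Q by (simp add: mult_left_mono)
        also have "\<dots> = ennreal (w n * g n)" using w0 g0 by (simp add: ennreal_mult)
        finally show ?thesis .
      qed
      have ex: "(\<lambda>n. x ^ n / fact n) sums exp x" for x :: real
        using exp_converges[of x] by (simp add: divide_inverse mult.commute)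
      have s1: "(\<lambda>n. w n * V) sums (exp (-x) * exp x * V)"
        unfolding w_def using sums_mult2[OF sums_mult[OF ex[of x], of "exp (-x)"], of V] by (simp add: mult_ac)
      have s2: "(\<lambda>n. w n * 2^n * Bq) sums (exp (-x) * exp (2*x) * Bq)"
      proof -
        have "(\<lambda>n. exp (-x) * ((2*x) ^ n / fact n) * Bq) sums (exp (-x) * exp (2*x) * Bq)"
          using sums_mult2[OF sums_mult[OF ex[of "2*x"], of "exp (-x)"], of Bq] .
        then show ?thesis unfolding w_def by (simp add: power_mult_distrib mult_ac)
      qed
      have s3: "(\<lambda>n. if n = 1 then w 1 * (2 * Bq + \<delta>) else 0) sums (w 1 * (2 * Bq + \<delta>))"
        using sums_single[of 1 "\<lambda>_. w 1 * (2 * Bq + \<delta>)"] by simp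
      have wg: "w n * g n = w n * V + w n * 2^n * Bq - (if n = 1 then w 1 * (2 * Bq + \<delta>) else 0)" for n
        by (cases "n = 1") (simp_all add: g_def algebra_simps)
      have S: "(\<lambda>n. w n * g n) sums (exp (-x) * exp x * V + exp (-x) * exp (2*x) * Bq - w 1 * (2 * Bq + \<delta>))"
        unfolding wg by (intro sums_diff sums_add s1 s2 s3)
      have Ph_le: "Ph N K TL TR h (\<lambda>E'. ennreal (Vfun N \<eta> E')) E \<le> (\<Sum>n. ennreal (w n * g n))"
        unfolding Ph_def by (intro suminf_le hterm) auto
      also have "\<dots> = ennreal (\<Sum>n. w n * g n)"
        using S w0 g0 by (intro suminf_ennreal2) (auto simp: sums_iff)
      also have "(\<Sum>n. w n * g n) = exp (-x) * exp x * V + exp (-x) * exp (2*x) * Bq - w 1 * (2 * Bq + \<delta>)"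
        using S by (simp add: sums_iff)
      also have "\<dots> \<le> V - (c1/2) * V powr \<alpha>"
      proof -
        have e1: "exp (-x) * exp x = 1" by (simp add: exp_minus)
        have e2: "exp (-x) * exp (2*x) = exp x" by (simp add: exp_add[symmetric])
        have w1: "w 1 * \<delta> = c1 * V powr \<alpha>"
          using L by (simp add: w_def \<delta>_def c1_def x_def field_simps)
        have "0 \<le> w 1 * Bq" using w0 Bq by simp
        moreover have "exp x * Bq \<le> (c1/2) * V powr \<alpha>" using V2 V by simp
        ultimately show ?thesis unfolding e1 e2 using w1 by (simp add: algebra_simps)
      qed
      finally show "Ph N K TL TR h (\<lambda>E'. ennreal (Vfun N \<eta> E')) E \<le> ennreal (Vfun N \<eta> E - c1 / 2 * Vfun N \<eta> E powr (1 - 1 / (2 * (1 - \<eta>))))"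
        by (simp add: V_def \<alpha>_def ennreal_leI)
    qed
    qed
  qed
  qed
qed

end
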